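(* Given the linear quantum stochastic system $dx = (\mathbb{J}_{2n} R -\tfrac{1}{2}C^{\sharp}C) x\, dt -C^{\sharp}\Sigma\, d\mathcal{U}$, $d\mathcal{Y} = C x\, dt + \Sigma\, d\mathcal{U}$, there exists a real symplectic transformation $V$ such that the following hold: 1. The transformed states $\begin{pmatrix} \hat{q} \\ \hat{p} \end{pmatrix}=\hat{x} = Vx= V \begin{pmatrix} q \\ p \end{pmatrix}$ can be partitioned as $\hat{q}=\begin{pmatrix}\hat{q}_a \\ \hat{q}_b \\ \hat{q}_c\end{pmatrix}$, $\hat{p}=\begin{pmatrix}\hat{p}_a \\ \hat{p}_b \\ \hat{p}_c\end{pmatrix}$, with $\hat{q}_a,\hat{p}_a\in$ ($k\times 1$), $\hat{q}_b,\hat{p}_b$ ($l\times 1$), $\hat{q}_c,\hat{p}_c$ ($(n-k-l)\times 1$), where (a) the states $\hat{q}_a$ and $\hat{p}_a$ are both controllable and observable; (b) the states $\hat{p}_b$ are controllable but unobservable; (c) the states $\hat{q}_b$ are uncontrollable but observable; (d) the states $\hat{q}_c$ and $\hat{p}_c$ are both uncontrollable and unobservable. 2. In the transformed states the system takes the form $d\hat{x} = \hat{A}\hat{x}\,dt + \hat{B}\,d\mathcal{U}$, $d\mathcal{Y} = \hat{C}\hat{x}\,dt + D\, d\mathcal{U}$ (with $D=\Sigma$), where, with respect to the ordering $(\hat{q}_a,\hat{q}_b,\hat{q}_c,\hat{p}_a,\hat{p}_b,\hat{p}_c)$, $\hat{A}=\begin{pmatrix} A_{co,11} & A_{13,1}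 & 0 & A_{co,12} & 0 & 0 \\ 0 & A_{\bar{c}o} & 0 & 0 & 0 & 0 \\ 0 & A_{43,1} & A_{\bar{c}\bar{o},11} & 0 & 0 & A_{\bar{c}\bar{o},12} \\ A_{co,21} & A_{13,2} & 0 & A_{co,22} & 0 & 0 \\ A_{21,1} & A_{23} & A_{24,1} & A_{21,2} & A_{c\bar{o}} & A_{24,2} \\ 0 & A_{43,2} & A_{\bar{c}\bar{o},21} & 0 & 0 & A_{\bar{c}\bar{o},22} \end{pmatrix}$, $\hat{B} = \begin{pmatrix} B_{co,1} \\ 0 \\ 0 \\ B_{co,2} \\ B_{c\bar{o}} \\ 0 \end{pmatrix}$, $\hat{C} = \begin{pmatrix} C_{co,1} & C_{\bar{c}o} & 0 & C_{co,2} & 0 & 0 \end{pmatrix}$.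
   Context: Setting: $x=\begin{pmatrix} q\\ p\end{pmatrix}$ with $q=(q_1,\dots,q_n)^\top$, $p=(p_1,\dots,p_n)^\top$ self-adjoint position/momentum operators satisfying the canonical commutation relations $[x,x^\top]=\imath\mathbb{J}_{2n}$, where $\mathbb{J}_{2k}=\begin{pmatrix} 0_{k\times k} & I_k\\ -I_k & 0_{k\times k}\end{pmatrix}$. $R$ is a real symmetric $2n\times 2n$ Hamiltonian matrix, $C$ a real $2m\times 2n$ coupling matrix, $\Sigma$ a real symplectic $2m\times 2m$ matrix, and $\mathcal{U},\mathcal{Y}$ are the $2m$-vectors of input and output field quadratures. For a $2r\times 2s$ matrix $X$, $X^{\sharp}=-\mathbb{J}_{2s}X^{\dagger}\mathbb{J}_{2r}$; a $2k\times 2k$ matrix $T$ is symplectic if $TT^{\sharp}=T^{\sharp}T=I_{2k}$. Only real symplectic state transformations preserve the structure of the system (self-adjointness and CCRs). With $A=\mathbb{J}_{2n}R-\tfrac12 C^\sharp C$, $B=-C^\sharp\Sigma$, the controllability matrix is $(B\ AB\ \cdots\ A^{2n-1}B)$ and the observability matrix is $(C; CA; \dots; CA^{2n-1})$; the controllable subspace is the image of the controllability matrix, the unobservable subspace is the kernel of the observability matrix, and the uncontrollable and observable subspaces are defined as the orthogonal complements in $\mathbb{R}^{2n}$ of the controllable and unobservable subspaces, respectively. *)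

theory Defs
  imports "Jordan_Normal_Form.Matrix"
begin

text \<open>Real matrices are Jordan_Normal_Form matrices of type real mat, with explicit
  dimensions. Indices are 0-based.\<close>

definition JJ :: "nat \<Rightarrow> real mat" where
  "JJ k = four_block_mat (0\<^sub>m k k) (1\<^sub>m k) (- 1\<^sub>m k) (0\<^sub>m k k)"

text \<open>For a 2r x 2s matrix X: X sharp = - J_{2s} X^dagger J_{2r} (real case: dagger = transpose).\<close>
definition sharp :: "real mat \<Rightarrow> real mat" where
  "sharp X = - (JJ (dim_col X div 2) * transpose_mat X * JJ (dim_row X div 2))"

definition symplectic :: "nat \<Rightarrow> real mat \<Rightarrow> bool" where
  "symplectic k T \<longleftrightarrow> T \<in> carrier_mat (2*k) (2*k)
      \<and> T * sharp T = 1\<^sub>m (2*k) \<and> sharp T * T = 1\<^sub>m (2*k)"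

text \<open>Controllability matrix (B AB ... A^(N-1) B) of an N x N matrix A and N x p matrix B.\<close>
definition ctrb_mat :: "real mat \<Rightarrow> real mat \<Rightarrow> real mat" where
  "ctrb_mat A B = (let N = dim_row A; p = dim_col B in
     mat N (N*p) (\<lambda>(i,j). ((A ^\<^sub>m (j div p)) * B) $$ (i, j mod p)))"

text \<open>Observability matrix (C; CA; ...; C A^(N-1)) of N x N matrix A and q x N matrix C.\<close>
definition obsv_mat :: "real mat \<Rightarrow> real mat \<Rightarrow> real mat" where
  "obsv_mat A C = (let N = dim_row A; q = dim_row C in
     mat (N*q) N (\<lambda>(i,j). (C * (A ^\<^sub>m (i div q))) $$ (i mod q, j)))"

definition controllable_subspace :: "real mat \<Rightarrow> real mat \<Rightarrow> real vec set" where
  "controllable_subspace A B =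
     {ctrb_mat A B *\<^sub>v u | u. u \<in> carrier_vec (dim_col (ctrb_mat A B))}"

definition unobservable_subspace :: "real mat \<Rightarrow> real mat \<Rightarrow> real vec set" where
  "unobservable_subspace A C =
     {x \<in> carrier_vec (dim_row A). obsv_mat A C *\<^sub>v x = 0\<^sub>v (dim_row (obsv_mat A C))}"

definition orth_compl :: "nat \<Rightarrow> real vec set \<Rightarrow> real vec set" where
  "orth_compl N S = {y \<in> carrier_vec N. \<forall>x\<in>S. y \<bullet> x = 0}"

definition uncontrollable_subspace :: "real mat \<Rightarrow> real mat \<Rightarrow> real vec set" where
  "uncontrollable_subspace A B = orth_compl (dim_row A) (controllable_subspace A B)"

definition observable_subspace :: "real mat \<Rightarrow> real mat \<Rightarrow> real vec set" where
  "observable_subspace A C = orth_compl (dim_row A) (unobservable_subspace A C)"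

text \<open>Span of the coordinate vectors e_i, i in S, inside R^N.\<close>
definition coord_span :: "nat \<Rightarrow> nat set \<Rightarrow> real vec set" where
  "coord_span N S = {x \<in> carrier_vec N. \<forall>i<N. i \<notin> S \<longrightarrow> x $ i = 0}"

text \<open>Block class of index i of xhat = (q_a,q_b,q_c,p_a,p_b,p_c) with sizes k,l,n-k-l:
  0 = q_a, 1 = q_b, 2 = q_c, 3 = p_a, 4 = p_b, 5 = p_c.\<close>
definition blk :: "nat \<Rightarrow> nat \<Rightarrow> nat \<Rightarrow> nat \<Rightarrow> nat" where
  "blk n k l i = (if i < n then (if i < k then 0 else if i < k + l then 1 else 2)
                  else (if i - n < k then 3 else if i - n < k + l then 4 else 5))"

definition idx_of :: "nat \<Rightarrow> nat \<Rightarrow> nat \<Rightarrow> nat set \<Rightarrow> nat set" where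
  "idx_of n k l S = {i. i < 2*n \<and> blk n k l i \<in> S}"

text \<open>Allowed (possibly nonzero) block positions of Ahat, row class r, column class c.\<close>
definition A_allowed :: "nat \<Rightarrow> nat \<Rightarrow> bool" where
  "A_allowed r c \<longleftrightarrow>
     (r = 0 \<and> c \<in> {0,1,3}) \<or> (r = 1 \<and> c = 1) \<or> (r = 2 \<and> c \<in> {1,2,5}) \<or>
     (r = 3 \<and> c \<in> {0,1,3}) \<or> r = 4 \<or> (r = 5 \<and> c \<in> {1,2,5})"

end

theory Submission
  imports Defs "Jordan_Normal_Form.Determinant"
begin

(* ---- part PA ---- *)
definition Jv :: "nat \<Rightarrow> real vec \<Rightarrow> real vec" where
  "Jv n x = vec (2*n) (\<lambda>i. if i < n then x $ (i+n) else - (x $ (i-n)))"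

lemma Jv_carrier[simp]: "Jv n x \<in> carrier_vec (2*n)" "dim_vec (Jv n x) = 2*n"
  unfolding Jv_def by auto

lemma Jv_index[simp]: "i < 2*n \<Longrightarrow> Jv n x $ i = (if i < n then x $ (i+n) else - (x $ (i-n)))"
  unfolding Jv_def by auto

lemma JJ_carrier[simp]: "JJ n \<in> carrier_mat (2*n) (2*n)"
  unfolding JJ_def by (metis four_block_carrier_mat mult_2 one_carrier_mat zero_carrier_mat)

lemma JJ_dims[simp]: "dim_row (JJ n) = 2*n" "dim_col (JJ n) = 2*n"
  using JJ_carrier[of n] unfolding carrier_mat_def by auto

lemma JJ_index: "i < 2*n \<Longrightarrow> j < 2*n \<Longrightarrow> JJ n $$ (i,j) =
  (if i < n then (if j = i + n then 1 else 0) else (if j + n = i then -1 else 0))"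
  unfolding JJ_def by (auto simp: index_mat_four_block)

lemma row_JJ: assumes "i < 2*n"
  shows "row (JJ n) i = (if i < n then unit_vec (2*n) (i+n) else - unit_vec (2*n) (i-n))"
  by (rule eq_vecI, insert assms, auto simp: JJ_index unit_vec_def)

lemma JJ_mult: assumes x: "x \<in> carrier_vec (2*n)" shows "JJ n *\<^sub>v x = Jv n x"
proof (rule eq_vecI)
  fix i assume "i < dim_vec (Jv n x)"
  hence i: "i < 2*n" by simp
  show "(JJ n *\<^sub>v x) $ i = Jv n x $ i"
    using i x by (auto simp: row_JJ)
qed simp

(* ---- part PB ---- *)
lemma sum_split2: "(\<Sum>i\<in>{0..<2*(n::nat)}. (f i :: real)) = (\<Sum>i\<in>{0..<n}. f i) + (\<Sum>i\<in>{0..<n}. f (i+n))"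
proof -
  have "(\<Sum>i\<in>{0..<2*n}. f i) = (\<Sum>i\<in>{0..<n}. f i) + (\<Sum>i\<in>{n..<2*n}. f i)"
    by (rule sum.atLeastLessThan_concat[symmetric], auto)
  also have "(\<Sum>i\<in>{n..<2*n}. f i) = (\<Sum>i\<in>{0..<n}. f (i+n))"
    using sum.shift_bounds_nat_ivl[of f 0 n n] by (simp add: mult_2)
  finally show ?thesis .
qed

definition om :: "nat \<Rightarrow> real vec \<Rightarrow> real vec \<Rightarrow> real" where
  "om n x y = x \<bullet> Jv n y"

lemma dot_split: fixes x y :: "real vec" assumes "x \<in> carrier_vec (2*n)" "y \<in> carrier_vec (2*n)"
  shows "x \<bullet> y = (\<Sum>i\<in>{0..<n}. x$i * y$i) + (\<Sum>i\<in>{0..<n}. x$(i+n) * y$(i+n))"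
  using assms unfolding scalar_prod_def by (simp add: sum_split2)

lemma om_sum: assumes "x \<in> carrier_vec (2*n)" "y \<in> carrier_vec (2*n)"
  shows "om n x y = (\<Sum>i\<in>{0..<n}. x$i * y$(i+n) - x$(i+n) * y$i)"
  using assms unfolding om_def by (simp add: dot_split sum_subtractf sum_negf)

lemma Jv_Jv: assumes "x \<in> carrier_vec (2*n)" shows "Jv n (Jv n x) = - x"
  by (rule eq_vecI, insert assms, auto)

lemma Jv_add: assumes "x \<in> carrier_vec (2*n)" "y \<in> carrier_vec (2*n)"
  shows "Jv n (x + y) = Jv n x + Jv n y"
  by (rule eq_vecI, insert assms, auto)

lemma Jv_smult: assumes "x \<in> carrier_vec (2*n)" shows "Jv n (c \<cdot>\<^sub>v x) = c \<cdot>\<^sub>v Jv n x"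
  by (rule eq_vecI, insert assms, auto)

lemma Jv_uminus: assumes "x \<in> carrier_vec (2*n)" shows "Jv n (- x) = - Jv n x"
  by (rule eq_vecI, insert assms, auto)

lemma Jv_zero[simp]: "Jv n (0\<^sub>v (2*n)) = 0\<^sub>v (2*n)"
  by (rule eq_vecI, auto)

lemma dot_Jv_Jv: assumes "a \<in> carrier_vec (2*n)" "b \<in> carrier_vec (2*n)"
  shows "Jv n a \<bullet> Jv n b = a \<bullet> b"
proof -
  have "Jv n a \<bullet> Jv n b = (\<Sum>i\<in>{0..<n}. Jv n a$i * Jv n b$i) + (\<Sum>i\<in>{0..<n}. Jv n a$(i+n) * Jv n b$(i+n))"
    by (rule dot_split, auto)
  also have "\<dots> = (\<Sum>i\<in>{0..<n}. a$(i+n) * b$(i+n)) + (\<Sum>i\<in>{0..<n}. a$i * b$i)"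
    by (intro arg_cong2[where f="(+)"] sum.cong, auto)
  also have "\<dots> = a \<bullet> b" using dot_split[OF assms] by simp
  finally show ?thesis .
qed

lemma Jv_dot: assumes "a \<in> carrier_vec (2*n)" "b \<in> carrier_vec (2*n)"
  shows "Jv n a \<bullet> b = - (a \<bullet> Jv n b)"
proof -
  have "Jv n a \<bullet> b = (\<Sum>i\<in>{0..<n}. Jv n a$i * b$i) + (\<Sum>i\<in>{0..<n}. Jv n a$(i+n) * b$(i+n))"
    by (rule dot_split, insert assms, auto)
  also have "\<dots> = (\<Sum>i\<in>{0..<n}. a$(i+n) * b$i) + (\<Sum>i\<in>{0..<n}. - (a$i * b$(i+n)))"
    by (intro arg_cong2[where f="(+)"] sum.cong, auto)
  moreover have "a \<bullet> Jv n b = (\<Sum>i\<in>{0..<n}. a$i * Jv n b$i) + (\<Sum>i\<in>{0..<n}. a$(i+n) * Jv n b$(i+n))"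
    by (rule dot_split, insert assms, auto)
  moreover have "\<dots> = (\<Sum>i\<in>{0..<n}. a$i * b$(i+n)) + (\<Sum>i\<in>{0..<n}. - (a$(i+n) * b$i))"
    by (intro arg_cong2[where f="(+)"] sum.cong, auto)
  ultimately show ?thesis by (simp add: sum_negf)
qed

lemma om_antisym: assumes "x \<in> carrier_vec (2*n)" "y \<in> carrier_vec (2*n)"
  shows "om n x y = - om n y x"
  using assms by (simp add: om_sum sum_negf[symmetric] algebra_simps)

lemma om_self[simp]: assumes "x \<in> carrier_vec (2*n)" shows "om n x x = 0"
  using om_antisym[OF assms assms] by simp

lemma om_add_right: assumes "x \<in> carrier_vec (2*n)" "y \<in> carrier_vec (2*n)" "z \<in> carrier_vec (2*n)"
  shows "om n x (y + z) = om n x y + om n x z"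
  using assms by (simp add: om_def Jv_add scalar_prod_add_distrib[of _ "2*n"])

lemma om_add_left: assumes "x \<in> carrier_vec (2*n)" "y \<in> carrier_vec (2*n)" "z \<in> carrier_vec (2*n)"
  shows "om n (x + y) z = om n x z + om n y z"
  using assms by (simp add: om_def add_scalar_prod_distrib[of _ "2*n"])

lemma om_smult_right: assumes "x \<in> carrier_vec (2*n)" "y \<in> carrier_vec (2*n)"
  shows "om n x (c \<cdot>\<^sub>v y) = c * om n x y"
  using assms by (simp add: om_def Jv_smult)

lemma om_smult_left: assumes "x \<in> carrier_vec (2*n)" "y \<in> carrier_vec (2*n)"
  shows "om n (c \<cdot>\<^sub>v x) y = c * om n x y"
  using assms by (simp add: om_def)

lemma om_zero_left[simp]: "y \<in> carrier_vec (2*n) \<Longrightarrow> om n (0\<^sub>v (2*n)) y = 0"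
  by (simp add: om_def)

lemma om_zero_right[simp]: "x \<in> carrier_vec (2*n) \<Longrightarrow> om n x (0\<^sub>v (2*n)) = 0"
  by (simp add: om_def)

lemma om_JJ: assumes "x \<in> carrier_vec (2*n)" "y \<in> carrier_vec (2*n)"
  shows "x \<bullet> (JJ n *\<^sub>v y) = om n x y"
  using assms by (simp add: JJ_mult om_def)

lemma om_unit: assumes "i < n" "y \<in> carrier_vec (2*n)"
  shows "om n (unit_vec (2*n) i) y = y $ (i+n)"
    "om n (unit_vec (2*n) (i+n)) y = - y $ i"
  using assms by (auto simp: om_def)

(* ---- part PC ---- *)
lemma JJ_mult_carrier[simp]: "JJ n *\<^sub>v v \<in> carrier_vec (2*n)"
  unfolding carrier_vec_def by simp

lemma vec_eq_by_dot: fixes a b :: "real vec"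
  assumes "a \<in> carrier_vec N" "b \<in> carrier_vec N" "\<And>x. x \<in> carrier_vec N \<Longrightarrow> x \<bullet> a = x \<bullet> b"
  shows "a = b"
proof (rule eq_vecI)
  fix i assume "i < dim_vec b"
  hence i: "i < N" using assms by auto
  have "unit_vec N i \<bullet> a = unit_vec N i \<bullet> b" using assms(3) by simp
  moreover have "unit_vec N i \<bullet> a = a $ i" by (rule scalar_prod_left_unit[OF assms(1) i])
  moreover have "unit_vec N i \<bullet> b = b $ i" by (rule scalar_prod_left_unit[OF assms(2) i])
  ultimately show "a $ i = b $ i" by simp
qed (insert assms, auto)

lemma mat_eq_by_vec: fixes M M' :: "real mat"
  assumes "M \<in> carrier_mat N N'" "M' \<in> carrier_mat N N'" "\<And>v. v \<in> carrier_vec N' \<Longrightarrow> M *\<^sub>v v = M' *\<^sub>v v"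
  shows "M = M'"
proof (rule eq_matI)
  fix i j assume "i < dim_row M'" "j < dim_col M'"
  hence ij: "i < N" "j < N'" using assms by auto
  have "(M *\<^sub>v unit_vec N' j) $ i = (M' *\<^sub>v unit_vec N' j) $ i" using assms(3) by simp
  moreover have "(M *\<^sub>v unit_vec N' j) $ i = M $$ (i,j)"
    using ij assms(1) by (simp add: scalar_prod_right_unit)
  moreover have "(M' *\<^sub>v unit_vec N' j) $ i = M' $$ (i,j)"
    using ij assms(2) by (simp add: scalar_prod_right_unit)
  ultimately show "M $$ (i,j) = M' $$ (i,j)" by simp
qed (insert assms, auto)

lemma sharp_sq: assumes "T \<in> carrier_mat (2*n) (2*n)"
  shows "sharp T = - (JJ n * transpose_mat T * JJ n)"
  using assms unfolding sharp_def by auto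

lemma sharp_carrier: assumes "T \<in> carrier_mat (2*n) (2*n)"
  shows "sharp T \<in> carrier_mat (2*n) (2*n)"
  using assms unfolding sharp_sq[OF assms] by auto

lemma sharp_mult_vec: assumes T: "T \<in> carrier_mat (2*n) (2*n)" and v: "v \<in> carrier_vec (2*n)"
  shows "sharp T *\<^sub>v v = - Jv n (transpose_mat T *\<^sub>v Jv n v)"
proof -
  have "(JJ n * transpose_mat T * JJ n) *\<^sub>v v = JJ n *\<^sub>v (transpose_mat T *\<^sub>v (JJ n *\<^sub>v v))"
  proof -
    have "(JJ n * transpose_mat T * JJ n) *\<^sub>v v = (JJ n * transpose_mat T) *\<^sub>v (JJ n *\<^sub>v v)"
      by (rule assoc_mult_mat_vec[of _ "2*n" "2*n"], insert T v, auto)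
    also have "\<dots> = JJ n *\<^sub>v (transpose_mat T *\<^sub>v (JJ n *\<^sub>v v))"
      by (rule assoc_mult_mat_vec[of _ "2*n" "2*n"], insert T v, auto)
    finally show ?thesis .
  qed
  also have "\<dots> = Jv n (transpose_mat T *\<^sub>v Jv n v)"
    using T v by (simp add: JJ_mult)
  finally show ?thesis unfolding sharp_sq[OF T] using T v by simp
qed

lemma symp_key: assumes S: "symplectic n T" and z: "z \<in> carrier_vec (2*n)"
  shows "transpose_mat T *\<^sub>v Jv n (T *\<^sub>v z) = Jv n z"
proof -
  have T: "T \<in> carrier_mat (2*n) (2*n)" using S unfolding symplectic_def by auto
  have "(sharp T * T) *\<^sub>v z = z" using S z unfolding symplectic_def by auto
  hence "sharp T *\<^sub>v (T *\<^sub>v z) = z" using T z sharp_carrier[OF T] by auto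
  hence e: "- Jv n (transpose_mat T *\<^sub>v Jv n (T *\<^sub>v z)) = z"
    using sharp_mult_vec[OF T, of "T *\<^sub>v z"] T z by auto
  define w where "w = transpose_mat T *\<^sub>v Jv n (T *\<^sub>v z)"
  have w: "w \<in> carrier_vec (2*n)" unfolding w_def using T by auto
  have "Jv n (- Jv n w) = Jv n z" using e unfolding w_def by simp
  thus ?thesis using w unfolding w_def[symmetric] by (simp add: Jv_uminus Jv_Jv)
qed

lemma symp_om: assumes S: "symplectic n T" and x: "x \<in> carrier_vec (2*n)" and y: "y \<in> carrier_vec (2*n)"
  shows "om n (T *\<^sub>v x) (T *\<^sub>v y) = om n x y"
proof -
  have T: "T \<in> carrier_mat (2*n) (2*n)" using S unfolding symplectic_def by auto
  have "om n (T *\<^sub>v x) (T *\<^sub>v y) = (T *\<^sub>v x) \<bullet> Jv n (T *\<^sub>v y)" unfolding om_def ..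
  also have "\<dots> = Jv n (T *\<^sub>v y) \<bullet> (T *\<^sub>v x)"
    by (rule comm_scalar_prod[of _ "2*n"], insert T x, auto)
  also have "\<dots> = (transpose_mat T *\<^sub>v Jv n (T *\<^sub>v y)) \<bullet> x"
    by (rule transpose_vec_mult_scalar[symmetric, OF T x], insert T, auto)
  also have "\<dots> = Jv n y \<bullet> x" using symp_key[OF S y] by simp
  also have "\<dots> = om n x y" unfolding om_def by (rule comm_scalar_prod[of _ "2*n"], insert x, auto)
  finally show ?thesis .
qed

lemma preserve_symp: assumes T: "T \<in> carrier_mat (2*n) (2*n)"
  and P: "\<And>x y. x \<in> carrier_vec (2*n) \<Longrightarrow> y \<in> carrier_vec (2*n) \<Longrightarrow> om n (T *\<^sub>v x) (T *\<^sub>v y) = om n x y"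
  shows "symplectic n T"
proof -
  have key: "transpose_mat T *\<^sub>v Jv n (T *\<^sub>v v) = Jv n v" if v: "v \<in> carrier_vec (2*n)" for v
  proof (rule vec_eq_by_dot[of _ "2*n"])
    show "transpose_mat T *\<^sub>v Jv n (T *\<^sub>v v) \<in> carrier_vec (2*n)" using T by auto
    show "Jv n v \<in> carrier_vec (2*n)" by simp
    fix x :: "real vec" assume x: "x \<in> carrier_vec (2*n)"
    have "x \<bullet> (transpose_mat T *\<^sub>v Jv n (T *\<^sub>v v)) = (transpose_mat T *\<^sub>v Jv n (T *\<^sub>v v)) \<bullet> x"
      by (rule comm_scalar_prod[of _ "2*n"], insert T x, auto)
    also have "\<dots> = Jv n (T *\<^sub>v v) \<bullet> (T *\<^sub>v x)"
      by (rule transpose_vec_mult_scalar[OF T x], insert T, auto)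
    also have "\<dots> = (T *\<^sub>v x) \<bullet> Jv n (T *\<^sub>v v)"
      by (rule comm_scalar_prod[of _ "2*n"], insert T x, auto)
    also have "\<dots> = om n x v" using P[OF x v] unfolding om_def .
    finally show "x \<bullet> (transpose_mat T *\<^sub>v Jv n (T *\<^sub>v v)) = x \<bullet> Jv n v" unfolding om_def .
  qed
  have ST: "sharp T * T = 1\<^sub>m (2*n)"
  proof (rule mat_eq_by_vec[of _ "2*n" "2*n"])
    show "sharp T * T \<in> carrier_mat (2*n) (2*n)" using T sharp_carrier[OF T] by auto
    fix v :: "real vec" assume v: "v \<in> carrier_vec (2*n)"
    have "(sharp T * T) *\<^sub>v v = sharp T *\<^sub>v (T *\<^sub>v v)" using T v sharp_carrier[OF T] by auto
    also have "\<dots> = - Jv n (Jv n v)" using sharp_mult_vec[OF T, of "T *\<^sub>v v"] key[OF v] T v by auto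
    also have "\<dots> = v" using v by (simp add: Jv_Jv)
    finally show "(sharp T * T) *\<^sub>v v = 1\<^sub>m (2*n) *\<^sub>v v" using v by simp
  qed auto
  have "T * sharp T = 1\<^sub>m (2*n)"
    by (rule mat_mult_left_right_inverse[OF sharp_carrier[OF T] T ST])
  with ST T show ?thesis unfolding symplectic_def by auto
qed

lemma symp_carrier: "symplectic n T \<Longrightarrow> T \<in> carrier_mat (2*n) (2*n)"
  unfolding symplectic_def by auto

lemma symp_mult: assumes "symplectic n T1" "symplectic n T2" shows "symplectic n (T2 * T1)"
proof (rule preserve_symp)
  have c: "T1 \<in> carrier_mat (2*n) (2*n)" "T2 \<in> carrier_mat (2*n) (2*n)" using assms symp_carrier by auto
  thus "T2 * T1 \<in> carrier_mat (2*n) (2*n)" by auto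
  fix x y :: "real vec" assume xy: "x \<in> carrier_vec (2*n)" "y \<in> carrier_vec (2*n)"
  thus "om n ((T2 * T1) *\<^sub>v x) ((T2 * T1) *\<^sub>v y) = om n x y"
    using c assms by (simp add: symp_om)
qed

lemma symp_one: "symplectic n (1\<^sub>m (2*n))"
  by (rule preserve_symp, auto)

lemma symp_inv: assumes "symplectic n T" "x \<in> carrier_vec (2*n)"
  shows "sharp T *\<^sub>v (T *\<^sub>v x) = x" "T *\<^sub>v (sharp T *\<^sub>v x) = x"
proof -
  have T: "T \<in> carrier_mat (2*n) (2*n)" using assms symp_carrier by auto
  have "(sharp T * T) *\<^sub>v x = x" "(T * sharp T) *\<^sub>v x = x" using assms unfolding symplectic_def by auto
  thus "sharp T *\<^sub>v (T *\<^sub>v x) = x" "T *\<^sub>v (sharp T *\<^sub>v x) = x" using T assms(2) sharp_carrier[OF T] by auto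
qed

(* ---- part PD ---- *)
lemma dot_self_zero: fixes x :: "real vec"
  assumes x: "x \<in> carrier_vec N" and z: "x \<bullet> x = 0" shows "x = 0\<^sub>v N"
proof (rule eq_vecI)
  have "(\<Sum>i\<in>{0..<N}. x$i * x$i) = 0" using z x unfolding scalar_prod_def by simp
  hence "\<forall>i\<in>{0..<N}. x$i * x$i = 0" by (subst sum_nonneg_eq_0_iff[symmetric], auto)
  thus "\<And>i. i < dim_vec (0\<^sub>v N) \<Longrightarrow> x $ i = 0\<^sub>v N $ i" by auto
qed (insert x, auto)

definition Vge :: "nat \<Rightarrow> nat \<Rightarrow> real vec set" where
  "Vge n j = {x \<in> carrier_vec (2*n). \<forall>i<n. i < j \<longrightarrow> x$i = 0 \<and> x$(i+n) = 0}"

definition Vlt :: "nat \<Rightarrow> nat \<Rightarrow> real vec set" where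
  "Vlt n j = {x \<in> carrier_vec (2*n). \<forall>i<n. j \<le> i \<longrightarrow> x$i = 0 \<and> x$(i+n) = 0}"

lemma Vge_carrier: "x \<in> Vge n j \<Longrightarrow> x \<in> carrier_vec (2*n)" unfolding Vge_def by auto
lemma Vlt_carrier: "x \<in> Vlt n j \<Longrightarrow> x \<in> carrier_vec (2*n)" unfolding Vlt_def by auto

lemma Vge_add: "x \<in> Vge n j \<Longrightarrow> y \<in> Vge n j \<Longrightarrow> x + y \<in> Vge n j"
  unfolding Vge_def by auto
lemma Vge_smult: "x \<in> Vge n j \<Longrightarrow> c \<cdot>\<^sub>v x \<in> Vge n j"
  unfolding Vge_def by auto
lemma Vge_uminus: "x \<in> Vge n j \<Longrightarrow> - x \<in> Vge n j"
  unfolding Vge_def by auto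
lemma Vge_minus: "x \<in> Vge n j \<Longrightarrow> y \<in> Vge n j \<Longrightarrow> x - y \<in> Vge n j"
  unfolding Vge_def by auto
lemma Vge_Jv: "x \<in> Vge n j \<Longrightarrow> Jv n x \<in> Vge n j"
  unfolding Vge_def by auto
lemma Vge_unit: "j \<le> i \<Longrightarrow> i < n \<Longrightarrow> unit_vec (2*n) i \<in> Vge n j"
  unfolding Vge_def by auto
lemma Vge_unit2: "j \<le> i \<Longrightarrow> i < n \<Longrightarrow> unit_vec (2*n) (i+n) \<in> Vge n j"
  unfolding Vge_def by auto

lemma om_Vge_Vlt: assumes "w \<in> Vge n j" "x \<in> Vlt n j" shows "om n w x = 0"
proof -
  have "om n w x = (\<Sum>i\<in>{0..<n}. w$i * x$(i+n) - w$(i+n) * x$i)"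
    using assms by (intro om_sum, auto simp: Vge_def Vlt_def)
  also have "\<dots> = (\<Sum>i\<in>{0..<n}. 0)"
    using assms unfolding Vge_def Vlt_def by (intro sum.cong, auto simp: not_less)
  finally show ?thesis by simp
qed

definition good :: "nat \<Rightarrow> nat \<Rightarrow> real mat \<Rightarrow> bool" where
  "good n j T \<longleftrightarrow> symplectic n T \<and> (\<forall>x\<in>Vlt n j. T *\<^sub>v x = x) \<and> (\<forall>x\<in>Vge n j. T *\<^sub>v x \<in> Vge n j)"

lemma good_mult: assumes "good n j T1" "good n j T2" shows "good n j (T2 * T1)"
proof -
  have c: "T1 \<in> carrier_mat (2*n) (2*n)" "T2 \<in> carrier_mat (2*n) (2*n)"
    using assms unfolding good_def by (auto simp: symp_carrier)
  show ?thesis using assms c unfolding good_def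
    by (auto simp: symp_mult Vge_carrier Vlt_carrier)
qed

definition tv :: "nat \<Rightarrow> real vec \<Rightarrow> real \<Rightarrow> real mat" where
  "tv n w c = mat (2*n) (2*n) (\<lambda>(a,b). (if a = b then 1 else 0) + c * w$a * (- (Jv n w $ b)))"

lemma tv_carrier: "tv n w c \<in> carrier_mat (2*n) (2*n)" unfolding tv_def by auto

lemma tv_mult: assumes w: "w \<in> carrier_vec (2*n)" and x: "x \<in> carrier_vec (2*n)"
  shows "tv n w c *\<^sub>v x = x + (c * om n w x) \<cdot>\<^sub>v w"
proof (rule eq_vecI)
  fix a assume "a < dim_vec (x + (c * om n w x) \<cdot>\<^sub>v w)"
  hence a: "a < 2*n" using x w by simp
  have r: "row (tv n w c) a = unit_vec (2*n) a + (c * w$a) \<cdot>\<^sub>v (- Jv n w)"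
    by (rule eq_vecI, insert a, auto simp: tv_def unit_vec_def)
  have "row (tv n w c) a \<bullet> x = unit_vec (2*n) a \<bullet> x + ((c * w$a) \<cdot>\<^sub>v (- Jv n w)) \<bullet> x"
    unfolding r by (rule add_scalar_prod_distrib[of _ "2*n"], insert x, auto)
  also have "\<dots> = x $ a + (c * w$a) * (- (Jv n w \<bullet> x))"
    using a x by simp
  also have "Jv n w \<bullet> x = - om n w x" unfolding om_def by (rule Jv_dot[OF w x])
  finally show "(tv n w c *\<^sub>v x) $ a = (x + (c * om n w x) \<cdot>\<^sub>v w) $ a"
    using a x w by (simp add: tv_def)
qed (insert x w, auto simp: tv_def)

lemma tv_symp: assumes w: "w \<in> carrier_vec (2*n)" shows "symplectic n (tv n w c)"
proof (rule preserve_symp[OF tv_carrier])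
  fix x y :: "real vec" assume x: "x \<in> carrier_vec (2*n)" and y: "y \<in> carrier_vec (2*n)"
  define a where "a = c * om n w x"
  define b where "b = c * om n w y"
  have "om n (x + a \<cdot>\<^sub>v w) (y + b \<cdot>\<^sub>v w) = om n x y + b * om n x w + a * om n w y"
    using x y w by (simp add: om_add_left om_add_right om_smult_left om_smult_right)
  also have "\<dots> = om n x y" unfolding a_def b_def using om_antisym[OF x w] by (simp add: algebra_simps)
  finally show "om n (tv n w c *\<^sub>v x) (tv n w c *\<^sub>v y) = om n x y"
    using x y w by (simp add: tv_mult a_def b_def)
qed

lemma tv_good: assumes w: "w \<in> Vge n j" shows "good n j (tv n w c)"
proof -
  have wc: "w \<in> carrier_vec (2*n)" using w by (rule Vge_carrier)
  show ?thesis unfolding good_def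
  proof (intro conjI ballI)
    show "symplectic n (tv n w c)" by (rule tv_symp[OF wc])
    fix x assume x: "x \<in> Vlt n j"
    have "0 \<cdot>\<^sub>v w = 0\<^sub>v (2*n)" using wc by auto
    thus "tv n w c *\<^sub>v x = x" using om_Vge_Vlt[OF w x] wc Vlt_carrier[OF x]
      by (simp add: tv_mult)
  next
    fix x assume x: "x \<in> Vge n j"
    show "tv n w c *\<^sub>v x \<in> Vge n j" using w x wc Vge_carrier[OF x]
      by (simp add: tv_mult Vge_add Vge_smult)
  qed
qed

lemma trans1: assumes x: "x \<in> Vge n j" and y: "y \<in> Vge n j" and nz: "om n x y \<noteq> 0"
  shows "\<exists>T. good n j T \<and> T *\<^sub>v x = y"
proof -
  have xc: "x \<in> carrier_vec (2*n)" and yc: "y \<in> carrier_vec (2*n)" using x y Vge_carrier by auto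
  define w where "w = y - x"
  have w: "w \<in> Vge n j" unfolding w_def by (rule Vge_minus[OF y x])
  have wc: "w \<in> carrier_vec (2*n)" using w Vge_carrier by auto
  have "om n w x = om n y x"
  proof -
    have "w = y + (-1) \<cdot>\<^sub>v x" unfolding w_def using xc yc by auto
    hence "om n w x = om n y x + (-1) * om n x x" using xc yc by (simp add: om_add_left om_smult_left)
    thus ?thesis using xc by simp
  qed
  hence omw: "om n w x = - om n x y" using om_antisym[OF yc xc] by simp
  define c where "c = 1 / om n w x"
  have "tv n w c *\<^sub>v x = x + w" using nz omw wc xc by (simp add: tv_mult c_def)
  also have "\<dots> = y" unfolding w_def using xc yc by auto
  finally show ?thesis using tv_good[OF w] by blast
qed

lemma trans2: assumes x: "x \<in> Vge n j" and y: "y \<in> Vge n j"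
  and xnz: "x \<noteq> 0\<^sub>v (2*n)" and ynz: "y \<noteq> 0\<^sub>v (2*n)"
  shows "\<exists>T. good n j T \<and> T *\<^sub>v x = y"
proof (cases "om n x y = 0")
  case False thus ?thesis using trans1[OF x y] by blast
next
  case True
  have xc: "x \<in> carrier_vec (2*n)" and yc: "y \<in> carrier_vec (2*n)" using x y Vge_carrier by auto
  have xx: "x \<bullet> x \<noteq> 0" using dot_self_zero[OF xc] xnz by blast
  have yy: "y \<bullet> y \<noteq> 0" using dot_self_zero[OF yc] ynz by blast
  have om1: "om n x (- Jv n v) = x \<bullet> v" if "v \<in> carrier_vec (2*n)" for v
    using that xc unfolding om_def by (simp add: Jv_uminus Jv_Jv)
  have om2: "om n (- Jv n v) y = - (v \<bullet> y)" if "v \<in> carrier_vec (2*n)" for v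
  proof -
    have "om n (- Jv n v) y = - (Jv n v \<bullet> Jv n y)" unfolding om_def using that yc by simp
    thus ?thesis using dot_Jv_Jv[OF that yc] by simp
  qed
  obtain z where z: "z \<in> Vge n j" "om n x z \<noteq> 0" "om n z y \<noteq> 0"
  proof (cases "x \<bullet> y = 0")
    case False
    show ?thesis
      by (rule that[of "- Jv n x"], insert x xc False xx, auto simp: om1 om2 Vge_uminus Vge_Jv comm_scalar_prod[OF xc yc])
  next
    case True
    have "om n x (- Jv n (x + y)) = x \<bullet> x + x \<bullet> y"
      using xc yc by (simp add: om1 scalar_prod_add_distrib[of _ "2*n"])
    moreover have "om n (- Jv n (x + y)) y = - (x \<bullet> y + y \<bullet> y)"
      using xc yc by (simp add: om2 add_scalar_prod_distrib[of _ "2*n"])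
    ultimately show ?thesis
      by (intro that[of "- Jv n (x + y)"], insert x y True xx yy, auto simp: Vge_uminus Vge_Jv Vge_add)
  qed
  obtain T1 where T1: "good n j T1" "T1 *\<^sub>v x = z" using trans1[OF x z(1,2)] by blast
  obtain T2 where T2: "good n j T2" "T2 *\<^sub>v z = y" using trans1[OF z(1) y z(3)] by blast
  have "T1 \<in> carrier_mat (2*n) (2*n)" "T2 \<in> carrier_mat (2*n) (2*n)"
    using T1 T2 unfolding good_def by (auto intro: symp_carrier)
  hence "(T2 * T1) *\<^sub>v x = y" using T1 T2 xc by auto
  thus ?thesis using good_mult[OF T1(1) T2(1)] by blast
qed

(* ---- part PE ---- *)
lemma trans1': assumes x: "x \<in> Vge n j" and y: "y \<in> Vge n j" and nz: "om n x y \<noteq> 0"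
  shows "\<exists>T. good n j T \<and> T *\<^sub>v x = y \<and> (\<forall>z\<in>carrier_vec (2*n). om n (y - x) z = 0 \<longrightarrow> T *\<^sub>v z = z)"
proof -
  have xc: "x \<in> carrier_vec (2*n)" and yc: "y \<in> carrier_vec (2*n)" using x y Vge_carrier by auto
  define w where "w = y - x"
  have w: "w \<in> Vge n j" unfolding w_def by (rule Vge_minus[OF y x])
  have wc: "w \<in> carrier_vec (2*n)" using w Vge_carrier by auto
  have "om n w x = om n y x"
  proof -
    have "w = y + (-1) \<cdot>\<^sub>v x" unfolding w_def using xc yc by auto
    hence "om n w x = om n y x + (-1) * om n x x" using xc yc by (simp add: om_add_left om_smult_left)
    thus ?thesis using xc by simp
  qed
  hence omw: "om n w x = - om n x y" using om_antisym[OF yc xc] by simp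
  define c where "c = 1 / om n w x"
  have "tv n w c *\<^sub>v x = x + w" using nz omw wc xc by (simp add: tv_mult c_def)
  also have "\<dots> = y" unfolding w_def using xc yc by auto
  finally have 1: "tv n w c *\<^sub>v x = y" .
  have 2: "tv n w c *\<^sub>v z = z" if "z \<in> carrier_vec (2*n)" "om n w z = 0" for z
  proof -
    have "0 \<cdot>\<^sub>v w = 0\<^sub>v (2*n)" using wc by auto
    thus ?thesis using that wc by (simp add: tv_mult)
  qed
  show ?thesis using tv_good[OF w] 1 2 unfolding w_def by blast
qed

abbreviation ee :: "nat \<Rightarrow> nat \<Rightarrow> real vec" where "ee n i \<equiv> unit_vec (2*n) i"

lemma L4a: assumes j: "j < n" and v: "v \<in> Vge n j" and v': "v' \<in> Vge n j"
  and o1: "om n (ee n j) v = 1" and o2: "om n (ee n j) v' = 1" and nz: "om n v v' \<noteq> 0"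
  shows "\<exists>T. good n j T \<and> T *\<^sub>v ee n j = ee n j \<and> T *\<^sub>v v = v'"
proof -
  have vc: "v \<in> carrier_vec (2*n)" and v'c: "v' \<in> carrier_vec (2*n)" using v v' Vge_carrier by auto
  have ec: "ee n j \<in> carrier_vec (2*n)" by simp
  obtain T where T: "good n j T" "T *\<^sub>v v = v'"
    "\<forall>z\<in>carrier_vec (2*n). om n (v' - v) z = 0 \<longrightarrow> T *\<^sub>v z = z"
    using trans1'[OF v v' nz] by blast
  have "v' - v = v' + (-1) \<cdot>\<^sub>v v" using vc v'c by auto
  hence "om n (v' - v) (ee n j) = om n v' (ee n j) + (-1) * om n v (ee n j)"
    using vc v'c by (simp add: om_add_left om_smult_left)
  also have "\<dots> = 0" using om_antisym[OF vc ec] om_antisym[OF v'c ec] o1 o2 by simp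
  finally have "T *\<^sub>v ee n j = ee n j" using T(3) ec by blast
  thus ?thesis using T by blast
qed

lemma L4: assumes j: "j < n" and v: "v \<in> Vge n j" and o1: "om n (ee n j) v = 1"
  shows "\<exists>T. good n j T \<and> T *\<^sub>v ee n j = ee n j \<and> T *\<^sub>v v = ee n (j+n)"
proof -
  have vc: "v \<in> carrier_vec (2*n)" using v Vge_carrier by auto
  have ec: "ee n j \<in> carrier_vec (2*n)" "ee n (j+n) \<in> carrier_vec (2*n)" by auto
  have f: "ee n (j+n) \<in> Vge n j" using j by (rule Vge_unit2[OF le_refl])
  have e: "ee n j \<in> Vge n j" using j by (rule Vge_unit[OF le_refl])
  have oef: "om n (ee n j) (ee n (j+n)) = 1" using j by (simp add: om_unit)
  show ?thesis
  proof (cases "om n v (ee n (j+n)) = 0")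
    case False
    from L4a[OF j v f o1 oef False] show ?thesis .
  next
    case True
    define z where "z = ee n j + ee n (j+n)"
    have zc: "z \<in> carrier_vec (2*n)" unfolding z_def by simp
    have z: "z \<in> Vge n j" unfolding z_def by (rule Vge_add[OF e f])
    have oez: "om n (ee n j) z = 1" unfolding z_def using j by (simp add: om_unit)
    have "om n v z = om n v (ee n j) + om n v (ee n (j+n))" unfolding z_def
      by (rule om_add_right[OF vc ec])
    also have "\<dots> = -1" using True om_antisym[OF vc ec(1)] o1 by simp
    finally have ovz: "om n v z \<noteq> 0" by simp
    have "om n z (ee n (j+n)) = om n (ee n j) (ee n (j+n)) + om n (ee n (j+n)) (ee n (j+n))"
      unfolding z_def by (rule om_add_left[OF ec ec(2)])
    hence ozf: "om n z (ee n (j+n)) \<noteq> 0" using oef ec by simp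
    obtain T1 where T1: "good n j T1" "T1 *\<^sub>v ee n j = ee n j" "T1 *\<^sub>v v = z"
      using L4a[OF j v z o1 oez ovz] by blast
    obtain T2 where T2: "good n j T2" "T2 *\<^sub>v ee n j = ee n j" "T2 *\<^sub>v z = ee n (j+n)"
      using L4a[OF j z f oez oef ozf] by blast
    have c: "T1 \<in> carrier_mat (2*n) (2*n)" "T2 \<in> carrier_mat (2*n) (2*n)"
      using T1 T2 unfolding good_def by (auto intro: symp_carrier)
    have "(T2 * T1) *\<^sub>v ee n j = ee n j" "(T2 * T1) *\<^sub>v v = ee n (j+n)"
      using c T1 T2 vc ec by auto
    thus ?thesis using good_mult[OF T1(1) T2(1)] by blast
  qed
qed

lemma Vge_big_zero: assumes x: "x \<in> Vge n j" and nj: "n \<le> j" shows "x = 0\<^sub>v (2*n)"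
proof -
  have xc: "x \<in> carrier_vec (2*n)" and P: "\<And>i. i < n \<Longrightarrow> i < j \<Longrightarrow> x$i = 0 \<and> x$(i+n) = 0"
    using x unfolding Vge_def by auto
  show ?thesis
  proof (rule eq_vecI)
    fix i assume "i < dim_vec (0\<^sub>v (2*n))"
    hence i: "i < 2*n" by simp
    show "x $ i = 0\<^sub>v (2 * n) $ i"
    proof (cases "i < n")
      case True thus ?thesis using P[of i] nj i by simp
    next
      case False
      hence k: "i - n < n" "i - n < j" and ik: "i - n + n = i" using i nj by auto
      have "x $ (i - n + n) = 0" using P[OF k] by blast
      thus ?thesis using ik i by simp
    qed
  next
    show "dim_vec x = dim_vec (0\<^sub>v (2*n))" using xc by simp
  qed
qed

lemma L5: assumes u: "u \<in> Vge n j" and v: "v \<in> Vge n j" and o1: "om n u v = 1"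
  shows "j < n \<and> (\<exists>T. good n j T \<and> T *\<^sub>v u = ee n j \<and> T *\<^sub>v v = ee n (j+n))"
proof -
  have uc: "u \<in> carrier_vec (2*n)" and vc: "v \<in> carrier_vec (2*n)" using u v Vge_carrier by auto
  have unz: "u \<noteq> 0\<^sub>v (2*n)" using o1 vc by auto
  have j: "j < n" using Vge_big_zero[OF u] unz by force
  have e: "ee n j \<in> Vge n j" using j by (rule Vge_unit[OF le_refl])
  have enz: "ee n j \<noteq> 0\<^sub>v (2*n)"
  proof
    assume "ee n j = 0\<^sub>v (2*n)"
    hence "ee n j $ j = 0\<^sub>v (2*n) $ j" by simp
    thus False using j by simp
  qed
  obtain T1 where T1: "good n j T1" "T1 *\<^sub>v u = ee n j" using trans2[OF u e unz enz] by blast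
  have c1: "T1 \<in> carrier_mat (2*n) (2*n)" "symplectic n T1" using T1 unfolding good_def by (auto intro: symp_carrier)
  have v1: "T1 *\<^sub>v v \<in> Vge n j" using T1 v unfolding good_def by auto
  have "om n (ee n j) (T1 *\<^sub>v v) = 1" using symp_om[OF c1(2) uc vc] T1 o1 by simp
  then obtain T2 where T2: "good n j T2" "T2 *\<^sub>v ee n j = ee n j" "T2 *\<^sub>v (T1 *\<^sub>v v) = ee n (j+n)"
    using L4[OF j v1] by blast
  have c2: "T2 \<in> carrier_mat (2*n) (2*n)" using T2 unfolding good_def by (auto intro: symp_carrier)
  have "(T2 * T1) *\<^sub>v u = ee n j" "(T2 * T1) *\<^sub>v v = ee n (j+n)" using c1 c2 T1 T2 uc vc by auto
  thus ?thesis using good_mult[OF T1(1) T2(1)] j by blast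
qed

(* ---- part PF ---- *)
definition subsp :: "nat \<Rightarrow> real vec set \<Rightarrow> bool" where
  "subsp N S \<longleftrightarrow> S \<subseteq> carrier_vec N \<and> 0\<^sub>v N \<in> S \<and> (\<forall>x\<in>S. \<forall>y\<in>S. x + y \<in> S) \<and> (\<forall>c. \<forall>x\<in>S. c \<cdot>\<^sub>v x \<in> S)"

definition addl :: "real vec \<Rightarrow> real vec set \<Rightarrow> real vec set" where
  "addl p W = {a \<cdot>\<^sub>v p + y | a y. y \<in> W}"

definition Iset :: "nat \<Rightarrow> nat \<Rightarrow> nat \<Rightarrow> nat \<Rightarrow> nat set" where
  "Iset n j k l = {i. (j \<le> i \<and> i < j+k) \<or> (j+n \<le> i \<and> i < j+n+k+l)}"

lemma coord_span_insert: assumes p: "p < N" "p \<notin> I"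
  shows "coord_span N (insert p I) = addl (unit_vec N p) (coord_span N I)"
proof
  show "coord_span N (insert p I) \<subseteq> addl (unit_vec N p) (coord_span N I)"
  proof
    fix x assume x: "x \<in> coord_span N (insert p I)"
    have xc: "x \<in> carrier_vec N" using x unfolding coord_span_def by auto
    define y where "y = x + (- (x$p)) \<cdot>\<^sub>v unit_vec N p"
    have "y \<in> coord_span N I" using x p unfolding coord_span_def y_def by auto
    moreover have "x = x$p \<cdot>\<^sub>v unit_vec N p + y"
      unfolding y_def by (rule eq_vecI, insert xc p, auto)
    ultimately show "x \<in> addl (unit_vec N p) (coord_span N I)" unfolding addl_def by blast
  qed
  show "addl (unit_vec N p) (coord_span N I) \<subseteq> coord_span N (insert p I)"
    unfolding addl_def coord_span_def using p by auto
qed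

lemma coord_span_empty: "coord_span N {} = {0\<^sub>v N}"
  unfolding coord_span_def by (auto intro!: eq_vecI)

lemma Iset_step: assumes j: "j < n" and b: "j + 1 + k + l \<le> n"
  shows "Iset n j (Suc k) l = insert j (insert (j+n) (Iset n (j+1) k l))"
    "j \<notin> insert (j+n) (Iset n (j+1) k l)" "j+n \<notin> Iset n (j+1) k l"
  using assms unfolding Iset_def by auto

lemma Iset_step0: assumes j: "j < n"
  shows "Iset n j 0 (Suc l) = insert (j+n) (Iset n (j+1) 0 l)" "j+n \<notin> Iset n (j+1) 0 l"
  using assms unfolding Iset_def by auto

lemma good_one: "good n j (1\<^sub>m (2*n))"
  unfolding good_def using symp_one by (auto simp: Vge_carrier Vlt_carrier)

lemma decomp: assumes x: "x \<in> Vge n j" and j: "j < n"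
  shows "x + (- (x$j)) \<cdot>\<^sub>v ee n j + (- (x$(j+n))) \<cdot>\<^sub>v ee n (j+n) \<in> Vge n (j+1)"
    "x = x$j \<cdot>\<^sub>v ee n j + x$(j+n) \<cdot>\<^sub>v ee n (j+n) + (x + (- (x$j)) \<cdot>\<^sub>v ee n j + (- (x$(j+n))) \<cdot>\<^sub>v ee n (j+n))"
  using x j unfolding Vge_def by (auto intro!: eq_vecI simp: less_Suc_eq)

lemma ee_Vlt: "j < n \<Longrightarrow> ee n j \<in> Vlt n (j+1)" "j < n \<Longrightarrow> ee n (j+n) \<in> Vlt n (j+1)"
  unfolding Vlt_def by auto

lemma Vge_mono: "x \<in> Vge n (j+1) \<Longrightarrow> x \<in> Vge n j" unfolding Vge_def by auto
lemma Vlt_mono: "x \<in> Vlt n j \<Longrightarrow> x \<in> Vlt n (j+1)" unfolding Vlt_def by auto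

lemma good_step: assumes g: "good n (j+1) V" and j: "j < n" shows "good n j V"
proof -
  have S: "symplectic n V" and F: "\<forall>x\<in>Vlt n (j+1). V *\<^sub>v x = x" and P: "\<forall>x\<in>Vge n (j+1). V *\<^sub>v x \<in> Vge n (j+1)"
    using g unfolding good_def by auto
  have Vc: "V \<in> carrier_mat (2*n) (2*n)" using S by (rule symp_carrier)
  show ?thesis unfolding good_def
  proof (intro conjI ballI S)
    fix x assume "x \<in> Vlt n j" thus "V *\<^sub>v x = x" using F Vlt_mono by auto
  next
    fix x assume x: "x \<in> Vge n j"
    define y where "y = x + (- (x$j)) \<cdot>\<^sub>v ee n j + (- (x$(j+n))) \<cdot>\<^sub>v ee n (j+n)"
    have y: "y \<in> Vge n (j+1)" unfolding y_def by (rule decomp(1)[OF x j])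
    have xe: "x = x$j \<cdot>\<^sub>v ee n j + x$(j+n) \<cdot>\<^sub>v ee n (j+n) + y" unfolding y_def by (rule decomp(2)[OF x j])
    have yc: "y \<in> carrier_vec (2*n)" using y Vge_carrier by auto
    define a where "a = x$j"
    define b where "b = x$(j+n)"
    have xe': "x = a \<cdot>\<^sub>v ee n j + b \<cdot>\<^sub>v ee n (j+n) + y" using xe unfolding a_def b_def .
    have ec: "a \<cdot>\<^sub>v ee n j \<in> carrier_vec (2*n)" "b \<cdot>\<^sub>v ee n (j+n) \<in> carrier_vec (2*n)" by auto
    have "V *\<^sub>v x = V *\<^sub>v (a \<cdot>\<^sub>v ee n j + b \<cdot>\<^sub>v ee n (j+n) + y)" using xe' by (rule arg_cong)
    also have "\<dots> = V *\<^sub>v (a \<cdot>\<^sub>v ee n j) + V *\<^sub>v (b \<cdot>\<^sub>v ee n (j+n)) + V *\<^sub>v y"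
      using mult_add_distrib_mat_vec[OF Vc add_carrier_vec[OF ec] yc] mult_add_distrib_mat_vec[OF Vc ec] by simp
    also have "\<dots> = a \<cdot>\<^sub>v (V *\<^sub>v ee n j) + b \<cdot>\<^sub>v (V *\<^sub>v ee n (j+n)) + V *\<^sub>v y"
      using mult_mat_vec[OF Vc, of "ee n j" a] mult_mat_vec[OF Vc, of "ee n (j+n)" b] by simp
    also have "\<dots> = a \<cdot>\<^sub>v ee n j + b \<cdot>\<^sub>v ee n (j+n) + V *\<^sub>v y"
    proof -
      have h1: "V *\<^sub>v ee n j = ee n j" using F ee_Vlt(1)[OF j] by blast
      have h2: "V *\<^sub>v ee n (j+n) = ee n (j+n)" using F ee_Vlt(2)[OF j] by blast
      show ?thesis unfolding h1 h2 ..
    qed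
    finally have eq: "V *\<^sub>v x = a \<cdot>\<^sub>v ee n j + b \<cdot>\<^sub>v ee n (j+n) + V *\<^sub>v y" .
    have "V *\<^sub>v y \<in> Vge n j" using P y by (blast intro: Vge_mono[of _ n j])
    thus "V *\<^sub>v x \<in> Vge n j" unfolding eq
      by (intro Vge_add Vge_smult Vge_unit[OF le_refl j] Vge_unit2[OF le_refl j])
  qed
qed

(* ---- part PG ---- *)
lemma subsp_add: "subsp N S \<Longrightarrow> x \<in> S \<Longrightarrow> y \<in> S \<Longrightarrow> x + y \<in> S"
  unfolding subsp_def by blast
lemma subsp_smult: "subsp N S \<Longrightarrow> x \<in> S \<Longrightarrow> c \<cdot>\<^sub>v x \<in> S"
  unfolding subsp_def by blast
lemma subsp_carrier: "subsp N S \<Longrightarrow> S \<subseteq> carrier_vec N"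
  unfolding subsp_def by blast
lemma subsp_zero: "subsp N S \<Longrightarrow> 0\<^sub>v N \<in> S"
  unfolding subsp_def by blast

lemma addl_image: assumes V: "V \<in> carrier_mat (2*n) (2*n)" and p: "p \<in> carrier_vec (2*n)"
  and Vp: "V *\<^sub>v p = p" and W: "W \<subseteq> carrier_vec (2*n)"
  shows "(\<lambda>x. V *\<^sub>v x) ` addl p W = addl p ((\<lambda>x. V *\<^sub>v x) ` W)"
proof -
  have e: "V *\<^sub>v (a \<cdot>\<^sub>v p + y) = a \<cdot>\<^sub>v p + V *\<^sub>v y" if y: "y \<in> W" for a y
  proof -
    have yc: "y \<in> carrier_vec (2*n)" using y W by auto
    have "V *\<^sub>v (a \<cdot>\<^sub>v p + y) = V *\<^sub>v (a \<cdot>\<^sub>v p) + V *\<^sub>v y"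
      by (rule mult_add_distrib_mat_vec[OF V _ yc], insert p, simp)
    also have "V *\<^sub>v (a \<cdot>\<^sub>v p) = a \<cdot>\<^sub>v (V *\<^sub>v p)" by (rule mult_mat_vec[OF V p])
    finally show ?thesis unfolding Vp .
  qed
  show ?thesis unfolding addl_def
  proof (intro equalityI subsetI)
    fix z assume "z \<in> (\<lambda>x. V *\<^sub>v x) ` {a \<cdot>\<^sub>v p + y |a y. y \<in> W}"
    then obtain a y where "y \<in> W" "z = V *\<^sub>v (a \<cdot>\<^sub>v p + y)" by blast
    thus "z \<in> {a \<cdot>\<^sub>v p + y |a y. y \<in> (\<lambda>x. V *\<^sub>v x) ` W}" using e by blast
  next
    fix z assume "z \<in> {a \<cdot>\<^sub>v p + y |a y. y \<in> (\<lambda>x. V *\<^sub>v x) ` W}"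
    then obtain a y where "y \<in> W" "z = a \<cdot>\<^sub>v p + V *\<^sub>v y" by blast
    thus "z \<in> (\<lambda>x. V *\<^sub>v x) ` {a \<cdot>\<^sub>v p + y |a y. y \<in> W}" using e[of y a, symmetric] by blast
  qed
qed

lemma image_comp_mat: assumes V: "V \<in> carrier_mat N N" and T: "T \<in> carrier_mat N N" and S: "S \<subseteq> carrier_vec N"
  shows "(\<lambda>x. (V * T) *\<^sub>v x) ` S = (\<lambda>x. V *\<^sub>v x) ` ((\<lambda>x. T *\<^sub>v x) ` S)"
proof -
  have "(V * T) *\<^sub>v x = V *\<^sub>v (T *\<^sub>v x)" if "x \<in> S" for x using that S V T by auto
  thus ?thesis by (auto simp: image_image)
qed

lemma image_subsp: assumes T: "T \<in> carrier_mat N N" and S: "subsp N S"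
  shows "subsp N ((\<lambda>x. T *\<^sub>v x) ` S)"
proof -
  have Sc: "S \<subseteq> carrier_vec N" using S by (rule subsp_carrier)
  show ?thesis unfolding subsp_def
  proof (intro conjI ballI allI)
    show "(\<lambda>x. T *\<^sub>v x) ` S \<subseteq> carrier_vec N" using T Sc by (auto intro!: mult_mat_vec_carrier)
    have "T *\<^sub>v 0\<^sub>v N = 0\<^sub>v N" using T by auto
    thus "0\<^sub>v N \<in> (\<lambda>x. T *\<^sub>v x) ` S" using subsp_zero[OF S] by (metis image_eqI)
  next
    fix x y assume "x \<in> (\<lambda>x. T *\<^sub>v x) ` S" "y \<in> (\<lambda>x. T *\<^sub>v x) ` S"
    then obtain a b where ab: "a \<in> S" "b \<in> S" "x = T *\<^sub>v a" "y = T *\<^sub>v b" by blast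
    have "x + y = T *\<^sub>v (a + b)" using ab Sc T by (simp add: mult_add_distrib_mat_vec[of _ N N] subset_iff)
    moreover have "a + b \<in> S" using ab S by (intro subsp_add)
    ultimately show "x + y \<in> (\<lambda>x. T *\<^sub>v x) ` S" by blast
  next
    fix c x assume "x \<in> (\<lambda>x. T *\<^sub>v x) ` S"
    then obtain a where a: "a \<in> S" "x = T *\<^sub>v a" by blast
    have "c \<cdot>\<^sub>v x = T *\<^sub>v (c \<cdot>\<^sub>v a)" using a Sc T by (simp add: mult_mat_vec subset_iff)
    moreover have "c \<cdot>\<^sub>v a \<in> S" using a S by (intro subsp_smult)
    ultimately show "c \<cdot>\<^sub>v x \<in> (\<lambda>x. T *\<^sub>v x) ` S" by blast
  qed
qed

lemma subsp_inter: assumes S: "subsp (2*n) S" shows "subsp (2*n) (S \<inter> Vge n j)"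
  unfolding subsp_def
proof (intro conjI ballI allI)
  show "S \<inter> Vge n j \<subseteq> carrier_vec (2 * n)" using subsp_carrier[OF S] by blast
  show "0\<^sub>v (2 * n) \<in> S \<inter> Vge n j" using subsp_zero[OF S] unfolding Vge_def by auto
  fix x y assume "x \<in> S \<inter> Vge n j" "y \<in> S \<inter> Vge n j"
  thus "x + y \<in> S \<inter> Vge n j" using subsp_add[OF S] Vge_add by blast
next
  fix c x assume "x \<in> S \<inter> Vge n j"
  thus "c \<cdot>\<^sub>v x \<in> S \<inter> Vge n j" using subsp_smult[OF S] Vge_smult by blast
qed

lemma Iset_empty: "Iset n j 0 0 = {}" unfolding Iset_def by auto

lemma base_case: assumes S: "subsp (2*n) S" and z: "\<forall>x\<in>S. x = 0\<^sub>v (2*n)"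
  shows "(\<lambda>x. 1\<^sub>m (2*n) *\<^sub>v x) ` S = coord_span (2*n) (Iset n j 0 0)"
proof -
  have "S = {0\<^sub>v (2*n)}" using subsp_zero[OF S] z by blast
  thus ?thesis unfolding Iset_empty coord_span_empty by auto
qed

lemma om_f: assumes j: "j < n" and x: "x \<in> carrier_vec (2*n)"
  shows "om n x (ee n (j+n)) = x $ j"
  using om_antisym[OF x, of "ee n (j+n)"] om_unit(2)[OF j x] by simp

lemma iso_nf: "j \<le> n \<Longrightarrow> subsp (2*n) S \<Longrightarrow> S \<subseteq> Vge n j \<Longrightarrow> (\<forall>x\<in>S. \<forall>y\<in>S. om n x y = 0) \<Longrightarrow>
  \<exists>V l. good n j V \<and> j + l \<le> n \<and> (\<lambda>x. V *\<^sub>v x) ` S = coord_span (2*n) (Iset n j 0 l)"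
proof (induction "n - j" arbitrary: j S rule: less_induct)
  case less
  note jn = less.prems(1) and S = less.prems(2) and SV = less.prems(3) and iso = less.prems(4)
  have Sc: "S \<subseteq> carrier_vec (2*n)" using S by (rule subsp_carrier)
  show ?case
  proof (cases "\<forall>x\<in>S. x = 0\<^sub>v (2*n)")
    case True
    have im: "(\<lambda>x. 1\<^sub>m (2*n) *\<^sub>v x) ` S = coord_span (2*n) (Iset n j 0 0)" by (rule base_case[OF S True])
    have jl: "j + 0 \<le> n" using jn by simp
    show ?thesis by (rule exI[of _ "1\<^sub>m (2*n)"], rule exI[of _ 0], intro conjI good_one jl im)
  next
    case False
    then obtain f where f: "f \<in> S" "f \<noteq> 0\<^sub>v (2*n)" by blast
    have fV: "f \<in> Vge n j" using f SV by auto
    have fc: "f \<in> carrier_vec (2*n)" using fV Vge_carrier by auto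
    have ff: "f \<bullet> f \<noteq> 0" using dot_self_zero[OF fc] f by blast
    define u where "u = (1 / (f \<bullet> f)) \<cdot>\<^sub>v Jv n f"
    have uV: "u \<in> Vge n j" unfolding u_def by (intro Vge_smult Vge_Jv fV)
    have "om n u f = (1 / (f \<bullet> f)) * (Jv n f \<bullet> Jv n f)" unfolding u_def om_def using fc by simp
    also have "\<dots> = 1" using dot_Jv_Jv[OF fc fc] ff by simp
    finally have ouf: "om n u f = 1" .
    from L5[OF uV fV ouf] obtain T where j: "j < n" and T: "good n j T" "T *\<^sub>v u = ee n j" "T *\<^sub>v f = ee n (j+n)"
      by blast
    have Ts: "symplectic n T" and Tc: "T \<in> carrier_mat (2*n) (2*n)" using T unfolding good_def by (auto intro: symp_carrier)
    define S' where "S' = (\<lambda>x. T *\<^sub>v x) ` S"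
    have S'sub: "subsp (2*n) S'" unfolding S'_def by (rule image_subsp[OF Tc S])
    have S'V: "S' \<subseteq> Vge n j" using T SV unfolding S'_def good_def by auto
    have S'iso: "\<forall>x\<in>S'. \<forall>y\<in>S'. om n x y = 0"
    proof (intro ballI)
      fix x y assume "x \<in> S'" "y \<in> S'"
      then obtain a b where ab: "a \<in> S" "b \<in> S" "x = T *\<^sub>v a" "y = T *\<^sub>v b" unfolding S'_def by blast
      have "om n x y = om n a b" unfolding ab(3,4) by (rule symp_om[OF Ts], insert ab Sc, auto)
      thus "om n x y = 0" using iso ab by auto
    qed
    have fS': "ee n (j+n) \<in> S'" unfolding S'_def by (rule image_eqI[where x=f], insert T(3) f(1), auto)
    define S'' where "S'' = S' \<inter> Vge n (j+1)"
    have S''sub: "subsp (2*n) S''" unfolding S''_def by (rule subsp_inter[OF S'sub])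
    have S''V: "S'' \<subseteq> Vge n (j+1)" unfolding S''_def by auto
    have S''iso: "\<forall>x\<in>S''. \<forall>y\<in>S''. om n x y = 0" using S'iso unfolding S''_def by auto
    have lt: "n - (j+1) < n - j" using j by auto
    have j1: "j+1 \<le> n" using j by simp
    from less.hyps[OF lt j1 S''sub S''V S''iso] obtain V'' l'' where
      V'': "good n (j+1) V''" "j + 1 + l'' \<le> n" "(\<lambda>x. V'' *\<^sub>v x) ` S'' = coord_span (2*n) (Iset n (j+1) 0 l'')"
      by blast
    have V''c: "V'' \<in> carrier_mat (2*n) (2*n)" using V'' unfolding good_def by (auto intro: symp_carrier)
    have S'eq: "S' = addl (ee n (j+n)) S''"
    proof (intro equalityI subsetI)
      fix x assume x: "x \<in> S'"
      have xV: "x \<in> Vge n j" using x S'V by auto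
      have xc: "x \<in> carrier_vec (2*n)" using xV Vge_carrier by auto
      have xj: "x $ j = 0" using S'iso x fS' om_f[OF j xc] by auto
      define y where "y = x + (- (x $ (j+n))) \<cdot>\<^sub>v ee n (j+n)"
      have "y \<in> S'" unfolding y_def by (intro subsp_add[OF S'sub x] subsp_smult[OF S'sub fS'])
      moreover have "y \<in> Vge n (j+1)" unfolding y_def using xV xj j unfolding Vge_def
        by (auto simp: less_Suc_eq)
      moreover have "x = x $ (j+n) \<cdot>\<^sub>v ee n (j+n) + y" unfolding y_def using xc j
        by (intro eq_vecI, auto)
      ultimately show "x \<in> addl (ee n (j+n)) S''" unfolding addl_def S''_def by blast
    next
      fix x assume "x \<in> addl (ee n (j+n)) S''"
      then obtain a y where "y \<in> S''" "x = a \<cdot>\<^sub>v ee n (j+n) + y" unfolding addl_def by blast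
      thus "x \<in> S'" using subsp_add[OF S'sub subsp_smult[OF S'sub fS'], of y a] unfolding S''_def by auto
    qed
    have gV: "good n j (V'' * T)" by (rule good_mult[OF T(1) good_step[OF V''(1) j]])
    have "(\<lambda>x. (V'' * T) *\<^sub>v x) ` S = (\<lambda>x. V'' *\<^sub>v x) ` S'"
      unfolding S'_def by (rule image_comp_mat[OF V''c Tc Sc])
    also have "\<dots> = addl (ee n (j+n)) ((\<lambda>x. V'' *\<^sub>v x) ` S'')"
      unfolding S'eq
    proof (rule addl_image[OF V''c])
      show "V'' *\<^sub>v ee n (j + n) = ee n (j + n)" using V''(1) ee_Vlt(2)[OF j] unfolding good_def by blast
      show "S'' \<subseteq> carrier_vec (2 * n)" by (rule subsp_carrier[OF S''sub])
    qed simp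
    also have "\<dots> = coord_span (2*n) (Iset n j 0 (Suc l''))"
      unfolding V''(3) Iset_step0[OF j] using j by (intro coord_span_insert[symmetric] Iset_step0(2), auto)
    finally have im: "(\<lambda>x. (V'' * T) *\<^sub>v x) ` S = coord_span (2*n) (Iset n j 0 (Suc l''))" .
    have jl: "j + Suc l'' \<le> n" using V''(2) by simp
    show ?thesis by (rule exI[of _ "V'' * T"], rule exI[of _ "Suc l''"], intro conjI gV jl im)
  qed
qed

(* ---- part PH ---- *)
lemma addl_carrier: "p \<in> carrier_vec N \<Longrightarrow> W \<subseteq> carrier_vec N \<Longrightarrow> addl p W \<subseteq> carrier_vec N"
  unfolding addl_def by auto

lemma gen_nf: "j \<le> n \<Longrightarrow> subsp (2*n) S \<Longrightarrow> S \<subseteq> Vge n j \<Longrightarrow>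
  \<exists>V k l. good n j V \<and> j + k + l \<le> n \<and> (\<lambda>x. V *\<^sub>v x) ` S = coord_span (2*n) (Iset n j k l)"
proof (induction "n - j" arbitrary: j S rule: less_induct)
  case less
  note jn = less.prems(1) and S = less.prems(2) and SV = less.prems(3)
  have Sc: "S \<subseteq> carrier_vec (2*n)" using S by (rule subsp_carrier)
  show ?case
  proof (cases "\<forall>x\<in>S. \<forall>y\<in>S. om n x y = 0")
    case True
    from iso_nf[OF jn S SV True] obtain V l where
      V: "good n j V" "j + l \<le> n" "(\<lambda>x. V *\<^sub>v x) ` S = coord_span (2*n) (Iset n j 0 l)" by blast
    have jl: "j + 0 + l \<le> n" using V(2) by simp
    show ?thesis by (rule exI[of _ V], rule exI[of _ 0], rule exI[of _ l], intro conjI V(1) jl V(3))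
  next
    case False
    then obtain u v where uv: "u \<in> S" "v \<in> S" "om n u v \<noteq> 0" by blast
    define v' where "v' = (1 / om n u v) \<cdot>\<^sub>v v"
    have v'S: "v' \<in> S" unfolding v'_def by (rule subsp_smult[OF S uv(2)])
    have uV: "u \<in> Vge n j" and v'V: "v' \<in> Vge n j" using uv v'S SV by auto
    have uc: "u \<in> carrier_vec (2*n)" and vc: "v \<in> carrier_vec (2*n)" using uv Sc by auto
    have ouv: "om n u v' = 1" unfolding v'_def using om_smult_right[OF uc vc] uv(3) by simp
    from L5[OF uV v'V ouv] obtain T where j: "j < n" and
      T: "good n j T" "T *\<^sub>v u = ee n j" "T *\<^sub>v v' = ee n (j+n)" by blast
    have Tc: "T \<in> carrier_mat (2*n) (2*n)" using T unfolding good_def by (auto intro: symp_carrier)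
    define S' where "S' = (\<lambda>x. T *\<^sub>v x) ` S"
    have S'sub: "subsp (2*n) S'" unfolding S'_def by (rule image_subsp[OF Tc S])
    have S'V: "S' \<subseteq> Vge n j" using T SV unfolding S'_def good_def by auto
    have eS': "ee n j \<in> S'" unfolding S'_def by (rule image_eqI[where x=u], insert T(2) uv(1), auto)
    have fS': "ee n (j+n) \<in> S'" unfolding S'_def by (rule image_eqI[where x=v'], insert T(3) v'S, auto)
    define S'' where "S'' = S' \<inter> Vge n (j+1)"
    have S''sub: "subsp (2*n) S''" unfolding S''_def by (rule subsp_inter[OF S'sub])
    have S''V: "S'' \<subseteq> Vge n (j+1)" unfolding S''_def by auto
    have lt: "n - (j+1) < n - j" using j by auto
    have j1: "j+1 \<le> n" using j by simp
    from less.hyps[OF lt j1 S''sub S''V] obtain V'' k'' l'' where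
      V'': "good n (j+1) V''" "j + 1 + k'' + l'' \<le> n"
        "(\<lambda>x. V'' *\<^sub>v x) ` S'' = coord_span (2*n) (Iset n (j+1) k'' l'')"
      by blast
    have V''c: "V'' \<in> carrier_mat (2*n) (2*n)" using V'' unfolding good_def by (auto intro: symp_carrier)
    have S''c: "S'' \<subseteq> carrier_vec (2*n)" by (rule subsp_carrier[OF S''sub])
    have S'eq: "S' = addl (ee n j) (addl (ee n (j+n)) S'')"
    proof (intro equalityI subsetI)
      fix x assume x: "x \<in> S'"
      have xV: "x \<in> Vge n j" using x S'V by auto
      have xc: "x \<in> carrier_vec (2*n)" using xV Vge_carrier by auto
      define y where "y = x + (- (x$j)) \<cdot>\<^sub>v ee n j + (- (x$(j+n))) \<cdot>\<^sub>v ee n (j+n)"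
      have "y \<in> S'" unfolding y_def
        by (intro subsp_add[OF S'sub] x subsp_smult[OF S'sub fS'] subsp_smult[OF S'sub eS'])
      moreover have "y \<in> Vge n (j+1)" unfolding y_def by (rule decomp(1)[OF xV j])
      ultimately have yS'': "y \<in> S''" unfolding S''_def by blast
      have yc: "y \<in> carrier_vec (2*n)" using yS'' S''c by auto
      have "x = x$j \<cdot>\<^sub>v ee n j + x$(j+n) \<cdot>\<^sub>v ee n (j+n) + y" unfolding y_def by (rule decomp(2)[OF xV j])
      also have "\<dots> = x$j \<cdot>\<^sub>v ee n j + (x$(j+n) \<cdot>\<^sub>v ee n (j+n) + y)"
        by (rule assoc_add_vec[of _ "2*n"], insert yc, auto)
      finally have "x = x$j \<cdot>\<^sub>v ee n j + (x$(j+n) \<cdot>\<^sub>v ee n (j+n) + y)" .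
      thus "x \<in> addl (ee n j) (addl (ee n (j+n)) S'')" unfolding addl_def using yS'' by blast
    next
      fix x assume "x \<in> addl (ee n j) (addl (ee n (j+n)) S'')"
      then obtain a b y where y: "y \<in> S''" and x: "x = a \<cdot>\<^sub>v ee n j + (b \<cdot>\<^sub>v ee n (j+n) + y)"
        unfolding addl_def by blast
      have "y \<in> S'" using y unfolding S''_def by blast
      thus "x \<in> S'" unfolding x
        by (intro subsp_add[OF S'sub] subsp_smult[OF S'sub fS'] subsp_smult[OF S'sub eS'])
    qed
    have gV: "good n j (V'' * T)" by (rule good_mult[OF T(1) good_step[OF V''(1) j]])
    have fix1: "V'' *\<^sub>v ee n j = ee n j" using V''(1) ee_Vlt(1)[OF j] unfolding good_def by blast
    have fix2: "V'' *\<^sub>v ee n (j+n) = ee n (j+n)" using V''(1) ee_Vlt(2)[OF j] unfolding good_def by blast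
    have "(\<lambda>x. (V'' * T) *\<^sub>v x) ` S = (\<lambda>x. V'' *\<^sub>v x) ` S'"
      unfolding S'_def by (rule image_comp_mat[OF V''c Tc Sc])
    also have "\<dots> = addl (ee n j) ((\<lambda>x. V'' *\<^sub>v x) ` addl (ee n (j+n)) S'')"
      unfolding S'eq by (rule addl_image[OF V''c _ fix1 addl_carrier[OF _ S''c]], auto)
    also have "(\<lambda>x. V'' *\<^sub>v x) ` addl (ee n (j+n)) S'' = addl (ee n (j+n)) ((\<lambda>x. V'' *\<^sub>v x) ` S'')"
      by (rule addl_image[OF V''c _ fix2 S''c], auto)
    also have "addl (ee n j) (addl (ee n (j+n)) ((\<lambda>x. V'' *\<^sub>v x) ` S'')) = coord_span (2*n) (Iset n j (Suc k'') l'')"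
    proof -
      have b: "j + 1 + k'' + l'' \<le> n" by (rule V''(2))
      have "coord_span (2*n) (Iset n j (Suc k'') l'') = addl (ee n j) (coord_span (2*n) (insert (j+n) (Iset n (j+1) k'' l'')))"
        unfolding Iset_step(1)[OF j b] by (rule coord_span_insert, insert j Iset_step(2)[OF j b], auto)
      also have "coord_span (2*n) (insert (j+n) (Iset n (j+1) k'' l'')) = addl (ee n (j+n)) (coord_span (2*n) (Iset n (j+1) k'' l''))"
        by (rule coord_span_insert, insert j Iset_step(3)[OF j b], auto)
      finally show ?thesis unfolding V''(3) by simp
    qed
    finally have im: "(\<lambda>x. (V'' * T) *\<^sub>v x) ` S = coord_span (2*n) (Iset n j (Suc k'') l'')" .
    have jl: "j + Suc k'' + l'' \<le> n" using V''(2) by simp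
    show ?thesis by (rule exI[of _ "V'' * T"], rule exI[of _ "Suc k''"], rule exI[of _ l''], intro conjI gV jl im)
  qed
qed

(* ---- part PI ---- *)
fun vsum :: "nat \<Rightarrow> (nat \<Rightarrow> real vec) \<Rightarrow> nat \<Rightarrow> real vec" where
  "vsum N f 0 = 0\<^sub>v N"
| "vsum N f (Suc k) = vsum N f k + f k"

lemma vsum_carrier: "(\<And>i. i < k \<Longrightarrow> f i \<in> carrier_vec N) \<Longrightarrow> vsum N f k \<in> carrier_vec N"
  by (induction k, auto)

lemma vsum_index: "(\<And>i. i < k \<Longrightarrow> f i \<in> carrier_vec N) \<Longrightarrow> r < N \<Longrightarrow> vsum N f k $ r = (\<Sum>i<k. f i $ r)"
proof (induction k)
  case 0 thus ?case by simp
next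
  case (Suc k)
  have c: "vsum N f k \<in> carrier_vec N" "f k \<in> carrier_vec N" using Suc.prems by (auto intro: vsum_carrier)
  have dk: "dim_vec (f k) = N" using c by auto
  have "vsum N f (Suc k) $ r = vsum N f k $ r + f k $ r"
    by (simp, subst index_add_vec(1), simp add: dk Suc.prems(2), simp)
  thus ?case using Suc by simp
qed

lemma vsum_mult: assumes A: "A \<in> carrier_mat M N" and f: "\<And>i. i < k \<Longrightarrow> f i \<in> carrier_vec N"
  shows "A *\<^sub>v vsum N f k = vsum M (\<lambda>i. A *\<^sub>v f i) k"
  using f
proof (induction k)
  case 0 thus ?case using A by auto
next
  case (Suc k)
  have c: "vsum N f k \<in> carrier_vec N" "f k \<in> carrier_vec N" using Suc.prems by (auto intro: vsum_carrier)
  have "A *\<^sub>v vsum N f (Suc k) = A *\<^sub>v vsum N f k + A *\<^sub>v f k"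
    using mult_add_distrib_mat_vec[OF A c] by simp
  thus ?case using Suc by simp
qed

lemma vsum_subsp: assumes S: "subsp N S" shows "(\<And>i. i < k \<Longrightarrow> f i \<in> S) \<Longrightarrow> vsum N f k \<in> S"
  by (induction k, auto intro: subsp_zero[OF S] subsp_add[OF S])

lemma dep: fixes f :: "nat \<Rightarrow> real vec"
  assumes f: "\<And>i. i \<le> N \<Longrightarrow> f i \<in> carrier_vec N"
  shows "\<exists>c. (\<exists>i\<le>N. c i \<noteq> 0) \<and> (\<forall>r<N. (\<Sum>i<Suc N. c i * f i $ r) = 0)"
proof -
  define M where "M = mat\<^sub>r (Suc N) (Suc N) (\<lambda>r. if r = N then 0\<^sub>v (Suc N) else vec (Suc N) (\<lambda>i. f i $ r))"
  have Mc: "M \<in> carrier_mat (Suc N) (Suc N)" unfolding M_def by simp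
  have "det M = 0" unfolding M_def by (rule det_row_0, auto)
  then obtain v where v: "v \<in> carrier_vec (Suc N)" "v \<noteq> 0\<^sub>v (Suc N)" "M *\<^sub>v v = 0\<^sub>v (Suc N)"
    using det_0_iff_vec_prod_zero_field[OF Mc] by blast
  have "\<exists>i\<le>N. v $ i \<noteq> 0"
  proof (rule ccontr)
    assume "\<not> ?thesis"
    hence "v = 0\<^sub>v (Suc N)" using v(1) by (intro eq_vecI, auto simp: less_Suc_eq_le)
    thus False using v(2) by simp
  qed
  moreover have "\<forall>r<N. (\<Sum>i<Suc N. v $ i * f i $ r) = 0"
  proof (intro allI impI)
    fix r assume r: "r < N"
    have "(M *\<^sub>v v) $ r = 0" using v(3) r by simp
    moreover have "(M *\<^sub>v v) $ r = (\<Sum>i<Suc N. f i $ r * v $ i)"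
      using r v(1) unfolding M_def by (simp add: scalar_prod_def lessThan_atLeast0)
    ultimately show "(\<Sum>i<Suc N. v $ i * f i $ r) = 0" by (simp add: mult.commute)
  qed
  ultimately show ?thesis by blast
qed

lemma pow_vec_carrier: "A \<in> carrier_mat N N \<Longrightarrow> b \<in> carrier_vec N \<Longrightarrow> A ^\<^sub>m k *\<^sub>v b \<in> carrier_vec N"
  by (metis mult_mat_vec_carrier pow_carrier_mat)

lemma pow_mult_vec_Suc: assumes A: "A \<in> carrier_mat N N"
  shows "b \<in> carrier_vec N \<Longrightarrow> A ^\<^sub>m (Suc k) *\<^sub>v b = A *\<^sub>v (A ^\<^sub>m k *\<^sub>v b)"
proof (induction k arbitrary: b)
  case 0 thus ?case using A by simp
next
  case (Suc k b)
  have Ak: "A ^\<^sub>m Suc k \<in> carrier_mat N N" "A ^\<^sub>m k \<in> carrier_mat N N" using A by auto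
  have Ab: "A *\<^sub>v b \<in> carrier_vec N" using A Suc.prems by simp
  have "A ^\<^sub>m Suc (Suc k) *\<^sub>v b = (A ^\<^sub>m Suc k * A) *\<^sub>v b" by simp
  also have "\<dots> = A ^\<^sub>m Suc k *\<^sub>v (A *\<^sub>v b)" by (rule assoc_mult_mat_vec[OF Ak(1) A Suc.prems])
  also have "\<dots> = A *\<^sub>v (A ^\<^sub>m k *\<^sub>v (A *\<^sub>v b))" by (rule Suc.IH[OF Ab])
  also have "A ^\<^sub>m k *\<^sub>v (A *\<^sub>v b) = (A ^\<^sub>m k * A) *\<^sub>v b" by (rule assoc_mult_mat_vec[symmetric, OF Ak(2) A Suc.prems])
  also have "\<dots> = A ^\<^sub>m Suc k *\<^sub>v b" by simp
  finally show ?case .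
qed

lemma pow_mult_vec_add: assumes A: "A \<in> carrier_mat N N" and b: "b \<in> carrier_vec N"
  shows "A ^\<^sub>m (i + j) *\<^sub>v b = A ^\<^sub>m i *\<^sub>v (A ^\<^sub>m j *\<^sub>v b)"
proof (induction i)
  case 0 thus ?case using A b pow_vec_carrier[OF A b, of j] by simp
next
  case (Suc i)
  have "A ^\<^sub>m (Suc i + j) *\<^sub>v b = A *\<^sub>v (A ^\<^sub>m (i + j) *\<^sub>v b)" using pow_mult_vec_Suc[OF A b] by simp
  also have "\<dots> = A *\<^sub>v (A ^\<^sub>m i *\<^sub>v (A ^\<^sub>m j *\<^sub>v b))" using Suc by simp
  also have "\<dots> = A ^\<^sub>m Suc i *\<^sub>v (A ^\<^sub>m j *\<^sub>v b)" using pow_mult_vec_Suc[OF A pow_vec_carrier[OF A b, of j], of i] by simp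
  finally show ?case .
qed

lemma krylov: assumes A: "A \<in> carrier_mat N N" and b: "b \<in> carrier_vec N"
  shows "\<exists>d a. d \<le> N \<and> A ^\<^sub>m N *\<^sub>v b = vsum N (\<lambda>i. a i \<cdot>\<^sub>v (A ^\<^sub>m (N - d + i) *\<^sub>v b)) d"
proof -
  define f where "f i = A ^\<^sub>m i *\<^sub>v b" for i
  have fc: "f i \<in> carrier_vec N" for i unfolding f_def by (rule pow_vec_carrier[OF A b])
  obtain c where c: "\<exists>i\<le>N. c i \<noteq> 0" "\<forall>r<N. (\<Sum>i<Suc N. c i * f i $ r) = 0"
    using dep[of N f] fc by blast
  define D where "D = {i. i \<le> N \<and> c i \<noteq> 0}"
  have Dfin: "finite D" unfolding D_def by auto
  have Dne: "D \<noteq> {}" unfolding D_def using c(1) by auto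
  define d where "d = Max D"
  have dD: "d \<in> D" unfolding d_def using Dfin Dne by (rule Max_in)
  hence dN: "d \<le> N" and cd: "c d \<noteq> 0" unfolding D_def by auto
  have above: "c i = 0" if "d < i" "i \<le> N" for i
  proof (rule ccontr)
    assume "c i \<noteq> 0"
    hence "i \<in> D" using that unfolding D_def by auto
    hence "i \<le> d" unfolding d_def using Dfin by simp
    thus False using that by simp
  qed
  define a where "a i = - c i / c d" for i
  have fd: "f d = vsum N (\<lambda>i. a i \<cdot>\<^sub>v f i) d"
  proof (rule eq_vecI)
    show "dim_vec (f d) = dim_vec (vsum N (\<lambda>i. a i \<cdot>\<^sub>v f i) d)" using fc vsum_carrier[of d "\<lambda>i. a i \<cdot>\<^sub>v f i" N] by simp
    fix r assume "r < dim_vec (vsum N (\<lambda>i. a i \<cdot>\<^sub>v f i) d)"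
    hence r: "r < N" using vsum_carrier[of d "\<lambda>i. a i \<cdot>\<^sub>v f i" N] fc by simp
    have "(\<Sum>i<Suc N. c i * f i $ r) = (\<Sum>i<Suc d. c i * f i $ r)"
      by (rule sum.mono_neutral_right, insert dN above, auto)
    hence "(\<Sum>i<d. c i * f i $ r) + c d * f d $ r = 0" using c(2) r by simp
    hence "c d * f d $ r = - (\<Sum>i<d. c i * f i $ r)" by simp
    hence "f d $ r = - (\<Sum>i<d. c i * f i $ r) / c d" using cd by (simp add: field_simps)
    also have "\<dots> = (\<Sum>i<d. a i * f i $ r)"
      unfolding a_def by (simp add: sum_divide_distrib sum_negf)
    finally have "f d $ r = (\<Sum>i<d. a i * f i $ r)" .
    also have "\<dots> = vsum N (\<lambda>i. a i \<cdot>\<^sub>v f i) d $ r"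
    proof -
      have dims: "dim_vec (f i) = N" for i using fc[of i] by auto
      have "vsum N (\<lambda>i. a i \<cdot>\<^sub>v f i) d $ r = (\<Sum>i<d. (a i \<cdot>\<^sub>v f i) $ r)"
        by (rule vsum_index, insert fc r, auto)
      also have "\<dots> = (\<Sum>i<d. a i * f i $ r)" by (rule sum.cong, insert dims r, auto)
      finally show ?thesis by simp
    qed
    finally show "f d $ r = vsum N (\<lambda>i. a i \<cdot>\<^sub>v f i) d $ r" .
  qed
  have AN: "A ^\<^sub>m (N - d) \<in> carrier_mat N N" using A by simp
  have "A ^\<^sub>m N *\<^sub>v b = A ^\<^sub>m (N - d) *\<^sub>v f d"
    unfolding f_def using pow_mult_vec_add[OF A b, of "N - d" d] dN by simp
  also have "\<dots> = vsum N (\<lambda>i. A ^\<^sub>m (N - d) *\<^sub>v (a i \<cdot>\<^sub>v f i)) d"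
    unfolding fd by (rule vsum_mult[OF AN], insert fc, auto)
  also have "\<dots> = vsum N (\<lambda>i. a i \<cdot>\<^sub>v (A ^\<^sub>m (N - d + i) *\<^sub>v b)) d"
  proof -
    have "A ^\<^sub>m (N - d) *\<^sub>v (a i \<cdot>\<^sub>v f i) = a i \<cdot>\<^sub>v (A ^\<^sub>m (N - d + i) *\<^sub>v b)" for i
      unfolding f_def using mult_mat_vec[OF AN pow_vec_carrier[OF A b, of i], of "a i"] pow_mult_vec_add[OF A b, of "N - d" i] by simp
    thus ?thesis by simp
  qed
  finally show ?thesis using dN by blast
qed

(* ---- part PJ ---- *)
lemma subsp_zero_set: "subsp N {0\<^sub>v N}" unfolding subsp_def by auto

lemma ctrb_carrier: assumes A: "A \<in> carrier_mat N N" and B: "B \<in> carrier_mat N p"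
  shows "ctrb_mat A B \<in> carrier_mat N (N*p)"
  using A B unfolding ctrb_mat_def Let_def by auto

lemma ctrb_index: assumes A: "A \<in> carrier_mat N N" and B: "B \<in> carrier_mat N p"
  and r: "r < N" and i: "i < N*p"
  shows "ctrb_mat A B $$ (r, i) = (A ^\<^sub>m (i div p) *\<^sub>v col B (i mod p)) $ r"
proof -
  have p: "0 < p" using i by (cases p, auto)
  have "i mod p < p" using p by simp
  thus ?thesis using A B r i unfolding ctrb_mat_def Let_def by auto
qed

lemma ctrl_subsp: assumes A: "A \<in> carrier_mat N N" and B: "B \<in> carrier_mat N p"
  shows "subsp N (controllable_subspace A B)"
proof -
  let ?K = "ctrb_mat A B"
  have K: "?K \<in> carrier_mat N (N*p)" by (rule ctrb_carrier[OF A B])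
  show ?thesis unfolding subsp_def controllable_subspace_def
  proof (intro conjI ballI allI)
    show "{?K *\<^sub>v u |u. u \<in> carrier_vec (dim_col ?K)} \<subseteq> carrier_vec N" using K by auto
    have "?K *\<^sub>v 0\<^sub>v (N*p) = 0\<^sub>v N" using K by auto
    thus "0\<^sub>v N \<in> {?K *\<^sub>v u |u. u \<in> carrier_vec (dim_col ?K)}" using K by (metis (mono_tags, lifting) carrier_matD(2) mem_Collect_eq zero_carrier_vec)
  next
    fix x y assume "x \<in> {?K *\<^sub>v u |u. u \<in> carrier_vec (dim_col ?K)}" "y \<in> {?K *\<^sub>v u |u. u \<in> carrier_vec (dim_col ?K)}"
    then obtain u v where uv: "u \<in> carrier_vec (N*p)" "v \<in> carrier_vec (N*p)" "x = ?K *\<^sub>v u" "y = ?K *\<^sub>v v" using K by auto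
    have "x + y = ?K *\<^sub>v (u + v)" using uv K by (simp add: mult_add_distrib_mat_vec[OF K])
    thus "x + y \<in> {?K *\<^sub>v u |u. u \<in> carrier_vec (dim_col ?K)}" using uv K by auto
  next
    fix c x assume "x \<in> {?K *\<^sub>v u |u. u \<in> carrier_vec (dim_col ?K)}"
    then obtain u where u: "u \<in> carrier_vec (N*p)" "x = ?K *\<^sub>v u" using K by auto
    have "c \<cdot>\<^sub>v x = ?K *\<^sub>v (c \<cdot>\<^sub>v u)" using u K by (simp add: mult_mat_vec[OF K])
    thus "c \<cdot>\<^sub>v x \<in> {?K *\<^sub>v u |u. u \<in> carrier_vec (dim_col ?K)}" using u K by auto
  qed
qed

lemma ctrl_col: assumes A: "A \<in> carrier_mat N N" and B: "B \<in> carrier_mat N p"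
  and j: "j < N" and c: "c < p"
  shows "A ^\<^sub>m j *\<^sub>v col B c \<in> controllable_subspace A B"
proof -
  let ?K = "ctrb_mat A B"
  have K: "?K \<in> carrier_mat N (N*p)" by (rule ctrb_carrier[OF A B])
  have i: "j * p + c < N * p"
  proof -
    have "j * p + c < j * p + p" using c by simp
    also have "\<dots> = Suc j * p" by simp
    also have "\<dots> \<le> N * p" using j by (intro mult_right_mono, auto)
    finally show ?thesis .
  qed
  have dv: "(j * p + c) div p = j" "(j * p + c) mod p = c" using c by auto
  have "?K *\<^sub>v unit_vec (N*p) (j*p+c) = A ^\<^sub>m j *\<^sub>v col B c"
  proof (rule eq_vecI)
    show "dim_vec (?K *\<^sub>v unit_vec (N*p) (j*p+c)) = dim_vec (A ^\<^sub>m j *\<^sub>v col B c)" using K A by simp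
    fix r assume "r < dim_vec (A ^\<^sub>m j *\<^sub>v col B c)"
    hence r: "r < N" using A by simp
    have "(?K *\<^sub>v unit_vec (N*p) (j*p+c)) $ r = ?K $$ (r, j*p+c)"
      using K r i by (simp add: scalar_prod_right_unit)
    also have "\<dots> = (A ^\<^sub>m j *\<^sub>v col B c) $ r" using ctrb_index[OF A B r i] dv by simp
    finally show "(?K *\<^sub>v unit_vec (N*p) (j*p+c)) $ r = (A ^\<^sub>m j *\<^sub>v col B c) $ r" .
  qed
  moreover have "unit_vec (N*p) (j*p+c) \<in> carrier_vec (dim_col ?K)" using K by simp
  ultimately show ?thesis unfolding controllable_subspace_def by (metis (mono_tags, lifting) mem_Collect_eq)
qed

lemma ctrl_min: assumes A: "A \<in> carrier_mat N N" and B: "B \<in> carrier_mat N p"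
  and S: "subsp N S" and gen: "\<And>j c. j < N \<Longrightarrow> c < p \<Longrightarrow> A ^\<^sub>m j *\<^sub>v col B c \<in> S"
  shows "controllable_subspace A B \<subseteq> S"
proof
  let ?K = "ctrb_mat A B"
  have K: "?K \<in> carrier_mat N (N*p)" by (rule ctrb_carrier[OF A B])
  fix x assume "x \<in> controllable_subspace A B"
  then obtain u where u: "u \<in> carrier_vec (N*p)" "x = ?K *\<^sub>v u" unfolding controllable_subspace_def using K by auto
  have colK: "col ?K i = A ^\<^sub>m (i div p) *\<^sub>v col B (i mod p)" if i: "i < N*p" for i
  proof (rule eq_vecI)
    show "dim_vec (col ?K i) = dim_vec (A ^\<^sub>m (i div p) *\<^sub>v col B (i mod p))" using K A by simp
    fix r assume "r < dim_vec (A ^\<^sub>m (i div p) *\<^sub>v col B (i mod p))"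
    hence r: "r < N" using A by simp
    show "col ?K i $ r = (A ^\<^sub>m (i div p) *\<^sub>v col B (i mod p)) $ r"
      using ctrb_index[OF A B r i] K r i by simp
  qed
  have colc: "col ?K i \<in> carrier_vec N" for i using K unfolding carrier_vec_def by simp
  have "?K *\<^sub>v u = vsum N (\<lambda>i. u $ i \<cdot>\<^sub>v col ?K i) (N*p)"
  proof (rule eq_vecI)
    have vc: "vsum N (\<lambda>i. u $ i \<cdot>\<^sub>v col ?K i) (N*p) \<in> carrier_vec N" by (rule vsum_carrier, insert colc, auto)
    show "dim_vec (?K *\<^sub>v u) = dim_vec (vsum N (\<lambda>i. u $ i \<cdot>\<^sub>v col ?K i) (N*p))" using vc K by simp
    fix r assume "r < dim_vec (vsum N (\<lambda>i. u $ i \<cdot>\<^sub>v col ?K i) (N*p))"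
    hence r: "r < N" using vc by simp
    have "vsum N (\<lambda>i. u $ i \<cdot>\<^sub>v col ?K i) (N*p) $ r = (\<Sum>i<N*p. (u $ i \<cdot>\<^sub>v col ?K i) $ r)"
      by (rule vsum_index, insert colc r, auto)
    also have "\<dots> = (\<Sum>i<N*p. ?K $$ (r, i) * u $ i)"
      by (rule sum.cong, insert K r, auto)
    also have "\<dots> = (?K *\<^sub>v u) $ r" using K r u by (simp add: scalar_prod_def lessThan_atLeast0 mult.commute)
    finally show "(?K *\<^sub>v u) $ r = vsum N (\<lambda>i. u $ i \<cdot>\<^sub>v col ?K i) (N*p) $ r" by simp
  qed
  moreover have "vsum N (\<lambda>i. u $ i \<cdot>\<^sub>v col ?K i) (N*p) \<in> S"
  proof (rule vsum_subsp[OF S])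
    fix i assume i: "i < N*p"
    have p: "0 < p" using i by (cases p, auto)
    have "i div p < N" using i p by (simp add: div_less_iff_less_mult)
    hence "col ?K i \<in> S" unfolding colK[OF i] using gen p by auto
    thus "u $ i \<cdot>\<^sub>v col ?K i \<in> S" by (rule subsp_smult[OF S])
  qed
  ultimately show "x \<in> S" using u by simp
qed

lemma ctrl_carrier: assumes A: "A \<in> carrier_mat N N" and B: "B \<in> carrier_mat N p"
  shows "controllable_subspace A B \<subseteq> carrier_vec N"
  using subsp_carrier[OF ctrl_subsp[OF A B]] .

lemma ctrl_inv: assumes A: "A \<in> carrier_mat N N" and B: "B \<in> carrier_mat N p"
  and x: "x \<in> controllable_subspace A B"
  shows "A *\<^sub>v x \<in> controllable_subspace A B"
proof -
  let ?C = "controllable_subspace A B"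
  have Cs: "subsp N ?C" by (rule ctrl_subsp[OF A B])
  define S where "S = {y \<in> carrier_vec N. A *\<^sub>v y \<in> ?C}"
  have S: "subsp N S" unfolding subsp_def
  proof (intro conjI ballI allI)
    show "S \<subseteq> carrier_vec N" unfolding S_def by auto
    have "A *\<^sub>v 0\<^sub>v N = 0\<^sub>v N" using A by auto
    thus "0\<^sub>v N \<in> S" unfolding S_def using subsp_zero[OF Cs] by auto
    fix y z assume "y \<in> S" "z \<in> S"
    thus "y + z \<in> S" unfolding S_def using A subsp_add[OF Cs]
      by (auto simp: mult_add_distrib_mat_vec[OF A])
  next
    fix c y assume "y \<in> S"
    thus "c \<cdot>\<^sub>v y \<in> S" unfolding S_def using A subsp_smult[OF Cs]
      by (auto simp: mult_mat_vec[OF A])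
  qed
  have "?C \<subseteq> S"
  proof (rule ctrl_min[OF A B S])
    fix j c assume j: "j < N" and c: "c < p"
    define b where "b = col B c"
    have bc: "b \<in> carrier_vec N" unfolding b_def using B c by auto
    have "A *\<^sub>v (A ^\<^sub>m j *\<^sub>v b) \<in> ?C"
    proof (cases "Suc j < N")
      case True
      thus ?thesis using ctrl_col[OF A B True c] pow_mult_vec_Suc[OF A bc] unfolding b_def by simp
    next
      case False
      hence jN: "Suc j = N" using j by simp
      obtain d a where d: "d \<le> N" "A ^\<^sub>m N *\<^sub>v b = vsum N (\<lambda>i. a i \<cdot>\<^sub>v (A ^\<^sub>m (N - d + i) *\<^sub>v b)) d"
        using krylov[OF A bc] by blast
      have "vsum N (\<lambda>i. a i \<cdot>\<^sub>v (A ^\<^sub>m (N - d + i) *\<^sub>v b)) d \<in> ?C"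
      proof (rule vsum_subsp[OF Cs])
        fix i assume "i < d"
        hence "N - d + i < N" using d by simp
        thus "a i \<cdot>\<^sub>v (A ^\<^sub>m (N - d + i) *\<^sub>v b) \<in> ?C"
          using ctrl_col[OF A B _ c] subsp_smult[OF Cs] unfolding b_def by blast
      qed
      thus ?thesis using d(2) pow_mult_vec_Suc[OF A bc, of j] jN by simp
    qed
    thus "A ^\<^sub>m j *\<^sub>v col B c \<in> S" unfolding S_def b_def using pow_vec_carrier[OF A bc, of j] unfolding b_def by simp
  qed
  thus ?thesis using x unfolding S_def by auto
qed

(* ---- part PK ---- *)
lemma unobs_char: assumes A: "A \<in> carrier_mat N N" and C: "C \<in> carrier_mat q N"
  shows "x \<in> unobservable_subspace A C \<longleftrightarrow> x \<in> carrier_vec N \<and> (\<forall>j<N. C *\<^sub>v (A ^\<^sub>m j *\<^sub>v x) = 0\<^sub>v q)"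
proof -
  let ?O = "obsv_mat A C"
  have O: "?O \<in> carrier_mat (N*q) N" using A C unfolding obsv_mat_def Let_def by auto
  have ent: "(?O *\<^sub>v x) $ (j*q + r) = (C *\<^sub>v (A ^\<^sub>m j *\<^sub>v x)) $ r"
    if x: "x \<in> carrier_vec N" and j: "j < N" and r: "r < q" for x j r
  proof -
    have i: "j * q + r < N * q"
    proof -
      have "j * q + r < j * q + q" using r by simp
      also have "\<dots> = Suc j * q" by simp
      also have "\<dots> \<le> N * q" using j by (intro mult_right_mono, auto)
      finally show ?thesis .
    qed
    have dv: "(j * q + r) div q = j" "(j * q + r) mod q = r" using r by auto
    have Aj: "A ^\<^sub>m j \<in> carrier_mat N N" using A by simp
    have "row ?O (j*q+r) = row (C * A ^\<^sub>m j) r"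
      by (rule eq_vecI, insert O i A C dv r Aj, auto simp: obsv_mat_def Let_def)
    hence "(?O *\<^sub>v x) $ (j*q + r) = ((C * A ^\<^sub>m j) *\<^sub>v x) $ r" using O i C r Aj by simp
    also have "(C * A ^\<^sub>m j) *\<^sub>v x = C *\<^sub>v (A ^\<^sub>m j *\<^sub>v x)" using C Aj x by simp
    finally show ?thesis .
  qed
  show ?thesis
  proof
    assume x: "x \<in> unobservable_subspace A C"
    hence xc: "x \<in> carrier_vec N" and z: "?O *\<^sub>v x = 0\<^sub>v (N*q)"
      unfolding unobservable_subspace_def using A O by auto
    have "C *\<^sub>v (A ^\<^sub>m j *\<^sub>v x) = 0\<^sub>v q" if j: "j < N" for j
    proof (rule eq_vecI)
      fix r assume "r < dim_vec (0\<^sub>v q)"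
      hence r: "r < q" by simp
      have "j * q + r < N * q"
      proof -
        have "j * q + r < j * q + q" using r by simp
        also have "\<dots> = Suc j * q" by simp
        also have "\<dots> \<le> N * q" using j by (intro mult_right_mono, auto)
        finally show ?thesis .
      qed
      hence "(?O *\<^sub>v x) $ (j*q + r) = 0" using z by simp
      thus "(C *\<^sub>v (A ^\<^sub>m j *\<^sub>v x)) $ r = 0\<^sub>v q $ r" using ent[OF xc j r] r by simp
    qed (insert C, simp)
    thus "x \<in> carrier_vec N \<and> (\<forall>j<N. C *\<^sub>v (A ^\<^sub>m j *\<^sub>v x) = 0\<^sub>v q)" using xc by auto
  next
    assume R: "x \<in> carrier_vec N \<and> (\<forall>j<N. C *\<^sub>v (A ^\<^sub>m j *\<^sub>v x) = 0\<^sub>v q)"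
    hence xc: "x \<in> carrier_vec N" by auto
    have "?O *\<^sub>v x = 0\<^sub>v (N*q)"
    proof (rule eq_vecI)
      fix i assume "i < dim_vec (0\<^sub>v (N*q))"
      hence i: "i < N*q" by simp
      have q: "0 < q" using i by (cases q, auto)
      have j: "i div q < N" using i q by (simp add: div_less_iff_less_mult)
      have r: "i mod q < q" using q by simp
      have "i = (i div q) * q + i mod q" by simp
      hence "(?O *\<^sub>v x) $ i = (C *\<^sub>v (A ^\<^sub>m (i div q) *\<^sub>v x)) $ (i mod q)"
        using ent[OF xc j r] by simp
      thus "(?O *\<^sub>v x) $ i = 0\<^sub>v (N*q) $ i" using R j r i by simp
    qed (insert O, simp)
    thus "x \<in> unobservable_subspace A C" unfolding unobservable_subspace_def using xc A O by auto
  qed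
qed

lemma unobs_inv: assumes A: "A \<in> carrier_mat N N" and C: "C \<in> carrier_mat q N"
  and x: "x \<in> unobservable_subspace A C"
  shows "A *\<^sub>v x \<in> unobservable_subspace A C"
proof -
  have xc: "x \<in> carrier_vec N" and Z: "\<And>j. j < N \<Longrightarrow> C *\<^sub>v (A ^\<^sub>m j *\<^sub>v x) = 0\<^sub>v q"
    using x unobs_char[OF A C] by auto
  have Axc: "A *\<^sub>v x \<in> carrier_vec N" using A xc by simp
  have "C *\<^sub>v (A ^\<^sub>m j *\<^sub>v (A *\<^sub>v x)) = 0\<^sub>v q" if j: "j < N" for j
  proof -
    have e: "A ^\<^sub>m j *\<^sub>v (A *\<^sub>v x) = A ^\<^sub>m (Suc j) *\<^sub>v x"
      using pow_mult_vec_add[OF A xc, of j 1] A xc by simp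
    show ?thesis
    proof (cases "Suc j < N")
      case True thus ?thesis using Z[OF True] e by simp
    next
      case False
      hence jN: "Suc j = N" using j by simp
      obtain d a where d: "d \<le> N" "A ^\<^sub>m N *\<^sub>v x = vsum N (\<lambda>i. a i \<cdot>\<^sub>v (A ^\<^sub>m (N - d + i) *\<^sub>v x)) d"
        using krylov[OF A xc] by blast
      have "C *\<^sub>v vsum N (\<lambda>i. a i \<cdot>\<^sub>v (A ^\<^sub>m (N - d + i) *\<^sub>v x)) d
        = vsum q (\<lambda>i. C *\<^sub>v (a i \<cdot>\<^sub>v (A ^\<^sub>m (N - d + i) *\<^sub>v x))) d"
        by (rule vsum_mult[OF C], insert pow_vec_carrier[OF A xc], auto)
      also have "\<dots> \<in> {0\<^sub>v q}"
      proof (rule vsum_subsp[OF subsp_zero_set])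
        fix i assume "i < d"
        hence i: "N - d + i < N" using d by simp
        have "C *\<^sub>v (a i \<cdot>\<^sub>v (A ^\<^sub>m (N - d + i) *\<^sub>v x)) = a i \<cdot>\<^sub>v (C *\<^sub>v (A ^\<^sub>m (N - d + i) *\<^sub>v x))"
          by (rule mult_mat_vec[OF C pow_vec_carrier[OF A xc]])
        moreover have "a i \<cdot>\<^sub>v 0\<^sub>v q = 0\<^sub>v q" by (intro eq_vecI, auto)
        ultimately show "C *\<^sub>v (a i \<cdot>\<^sub>v (A ^\<^sub>m (N - d + i) *\<^sub>v x)) \<in> {0\<^sub>v q}" using Z[OF i] by simp
      qed
      finally show ?thesis using e d(2) jN by simp
    qed
  qed
  thus ?thesis using unobs_char[OF A C] Axc by auto
qed

(* ---- part PL ---- *)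
lemma smult_mat_mult_vec: assumes M: "M \<in> carrier_mat nr nc" and v: "v \<in> carrier_vec nc"
  shows "((c::real) \<cdot>\<^sub>m M) *\<^sub>v v = c \<cdot>\<^sub>v (M *\<^sub>v v)"
proof (rule eq_vecI)
  fix i assume "i < dim_vec (c \<cdot>\<^sub>v (M *\<^sub>v v))"
  hence i: "i < nr" using M by simp
  have "row (c \<cdot>\<^sub>m M) i = c \<cdot>\<^sub>v row M i" using M i by (intro eq_vecI, auto)
  thus "((c \<cdot>\<^sub>m M) *\<^sub>v v) $ i = (c \<cdot>\<^sub>v (M *\<^sub>v v)) $ i" using M v i by simp
qed (insert M, auto)

lemma mat_vec_vsum: assumes M: "M \<in> carrier_mat N p" and u: "u \<in> carrier_vec p"
  shows "M *\<^sub>v u = vsum N (\<lambda>i. u $ i \<cdot>\<^sub>v col M i) p"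
proof (rule eq_vecI)
  have colc: "col M i \<in> carrier_vec N" for i using M unfolding carrier_vec_def by simp
  have vc: "vsum N (\<lambda>i. u $ i \<cdot>\<^sub>v col M i) p \<in> carrier_vec N" by (rule vsum_carrier, insert colc, auto)
  show "dim_vec (M *\<^sub>v u) = dim_vec (vsum N (\<lambda>i. u $ i \<cdot>\<^sub>v col M i) p)" using vc M by simp
  fix r assume "r < dim_vec (vsum N (\<lambda>i. u $ i \<cdot>\<^sub>v col M i) p)"
  hence r: "r < N" using vc by simp
  have "vsum N (\<lambda>i. u $ i \<cdot>\<^sub>v col M i) p $ r = (\<Sum>i<p. (u $ i \<cdot>\<^sub>v col M i) $ r)"
    by (rule vsum_index, insert colc r, auto)
  also have "\<dots> = (\<Sum>i<p. M $$ (r, i) * u $ i)"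
    by (rule sum.cong, insert M r, auto)
  also have "\<dots> = (M *\<^sub>v u) $ r" using M r u by (simp add: scalar_prod_def lessThan_atLeast0 mult.commute)
  finally show "(M *\<^sub>v u) $ r = vsum N (\<lambda>i. u $ i \<cdot>\<^sub>v col M i) p $ r" by simp
qed

lemma sharp_rect: assumes G: "G \<in> carrier_mat (2*m) (2*n)" and w: "w \<in> carrier_vec (2*m)"
  shows "sharp G *\<^sub>v w = - Jv n (transpose_mat G *\<^sub>v Jv m w)"
proof -
  have sG: "sharp G = - (JJ n * transpose_mat G * JJ m)" using G unfolding sharp_def by auto
  have "(JJ n * transpose_mat G * JJ m) *\<^sub>v w = (JJ n * transpose_mat G) *\<^sub>v (JJ m *\<^sub>v w)"
    by (rule assoc_mult_mat_vec[of _ "2*n" "2*m"], insert G w, auto)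
  also have "\<dots> = JJ n *\<^sub>v (transpose_mat G *\<^sub>v (JJ m *\<^sub>v w))"
    by (rule assoc_mult_mat_vec[of _ "2*n" "2*n" _ "2*m"], insert G w, auto)
  also have "\<dots> = Jv n (transpose_mat G *\<^sub>v Jv m w)" using G w by (simp add: JJ_mult)
  finally show ?thesis unfolding sG using G w by simp
qed

lemma sharp_rect_carrier: assumes G: "G \<in> carrier_mat (2*m) (2*n)"
  shows "sharp G \<in> carrier_mat (2*n) (2*m)"
  using G unfolding sharp_def by auto

locale qsys =
  fixes n m :: nat and R C \<Sigma> :: "real mat"
  assumes R: "R \<in> carrier_mat (2*n) (2*n)" "transpose_mat R = R"
    and C: "C \<in> carrier_mat (2*m) (2*n)"
    and Sigma: "symplectic m \<Sigma>"
begin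

definition "AA = JJ n * R - (1/2) \<cdot>\<^sub>m (sharp C * C)"
definition "BB = - (sharp C * \<Sigma>)"

lemma Sc: "\<Sigma> \<in> carrier_mat (2*m) (2*m)" using Sigma by (rule symp_carrier)
lemma sCc: "sharp C \<in> carrier_mat (2*n) (2*m)" by (rule sharp_rect_carrier[OF C])

lemma AA_carrier: "AA \<in> carrier_mat (2*n) (2*n)"
  unfolding AA_def using R C sCc by auto

lemma BB_carrier: "BB \<in> carrier_mat (2*n) (2*m)"
  unfolding BB_def using sCc Sc by auto

definition "P y = transpose_mat C *\<^sub>v Jv m (C *\<^sub>v y)"

lemma P_carrier: "P y \<in> carrier_vec (2*n)" unfolding P_def using C by auto

lemma AA_mult: assumes y: "y \<in> carrier_vec (2*n)"
  shows "AA *\<^sub>v y = Jv n (R *\<^sub>v y) + (1/2) \<cdot>\<^sub>v Jv n (P y)"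
proof -
  have c1: "JJ n * R \<in> carrier_mat (2*n) (2*n)" using R by auto
  have c2: "(1/2) \<cdot>\<^sub>m (sharp C * C) \<in> carrier_mat (2*n) (2*n)" using sCc C by auto
  have "AA *\<^sub>v y = (JJ n * R) *\<^sub>v y - ((1/2) \<cdot>\<^sub>m (sharp C * C)) *\<^sub>v y"
    unfolding AA_def by (rule minus_mult_distrib_mat_vec[OF c1 c2 y])
  also have "(JJ n * R) *\<^sub>v y = JJ n *\<^sub>v (R *\<^sub>v y)" by (rule assoc_mult_mat_vec, insert R y, auto)
  also have "\<dots> = Jv n (R *\<^sub>v y)" using R y by (simp add: JJ_mult)
  also have "((1/2) \<cdot>\<^sub>m (sharp C * C)) *\<^sub>v y = (1/2) \<cdot>\<^sub>v ((sharp C * C) *\<^sub>v y)"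
    by (rule smult_mat_mult_vec[OF _ y], insert sCc C, auto)
  also have "(sharp C * C) *\<^sub>v y = sharp C *\<^sub>v (C *\<^sub>v y)" using sCc C y by auto
  also have "\<dots> = - Jv n (P y)" unfolding P_def by (rule sharp_rect[OF C], insert C y, auto)
  finally show ?thesis using P_carrier[of y] by (intro eq_vecI, auto)
qed

lemma BB_mult: assumes u: "u \<in> carrier_vec (2*m)"
  shows "BB *\<^sub>v u = Jv n (transpose_mat C *\<^sub>v Jv m (\<Sigma> *\<^sub>v u))"
proof -
  have "BB *\<^sub>v u = - ((sharp C * \<Sigma>) *\<^sub>v u)" unfolding BB_def using sCc Sc u by simp
  also have "(sharp C * \<Sigma>) *\<^sub>v u = sharp C *\<^sub>v (\<Sigma> *\<^sub>v u)" using sCc Sc u by auto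
  also have "\<dots> = - Jv n (transpose_mat C *\<^sub>v Jv m (\<Sigma> *\<^sub>v u))" by (rule sharp_rect[OF C], insert Sc u, auto)
  finally show ?thesis using C by (intro eq_vecI, auto)
qed

lemma om_BB: assumes u: "u \<in> carrier_vec (2*m)" and z: "z \<in> carrier_vec (2*n)"
  shows "om n (BB *\<^sub>v u) z = Jv m (\<Sigma> *\<^sub>v u) \<bullet> (C *\<^sub>v z)"
proof -
  have v: "transpose_mat C *\<^sub>v Jv m (\<Sigma> *\<^sub>v u) \<in> carrier_vec (2*n)" using C by auto
  have "om n (BB *\<^sub>v u) z = Jv n (transpose_mat C *\<^sub>v Jv m (\<Sigma> *\<^sub>v u)) \<bullet> Jv n z"
    unfolding om_def BB_mult[OF u] ..
  also have "\<dots> = (transpose_mat C *\<^sub>v Jv m (\<Sigma> *\<^sub>v u)) \<bullet> z" by (rule dot_Jv_Jv[OF v z])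
  also have "\<dots> = Jv m (\<Sigma> *\<^sub>v u) \<bullet> (C *\<^sub>v z)" by (rule transpose_vec_mult_scalar[OF C z], simp)
  finally show ?thesis .
qed

lemma om_AA: assumes y: "y \<in> carrier_vec (2*n)" and z: "z \<in> carrier_vec (2*n)"
  and Cz: "C *\<^sub>v z = 0\<^sub>v (2*m)"
  shows "om n (AA *\<^sub>v y) z = - om n y (AA *\<^sub>v z)"
proof -
  have Py: "P y \<in> carrier_vec (2*n)" "P z \<in> carrier_vec (2*n)" by (rule P_carrier)+
  have Ry: "R *\<^sub>v y \<in> carrier_vec (2*n)" "R *\<^sub>v z \<in> carrier_vec (2*n)" using R y z by auto
  have Pz0: "P z = 0\<^sub>v (2*n)" unfolding P_def Cz using C by (simp, intro eq_vecI, auto)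
  have PYz: "P y \<bullet> z = 0"
  proof -
    have "P y \<bullet> z = Jv m (C *\<^sub>v y) \<bullet> (C *\<^sub>v z)" unfolding P_def
      by (rule transpose_vec_mult_scalar[OF C z], simp)
    thus ?thesis unfolding Cz by simp
  qed
  have Rsym: "(R *\<^sub>v y) \<bullet> z = y \<bullet> (R *\<^sub>v z)"
    using transpose_vec_mult_scalar[OF R(1) z y] R(2) by simp
  have "om n (AA *\<^sub>v y) z = (Jv n (R *\<^sub>v y) + (1/2) \<cdot>\<^sub>v Jv n (P y)) \<bullet> Jv n z"
    unfolding om_def AA_mult[OF y] ..
  also have "\<dots> = Jv n (R *\<^sub>v y) \<bullet> Jv n z + (1/2) * (Jv n (P y) \<bullet> Jv n z)"
    by (subst add_scalar_prod_distrib[of _ "2*n"], auto)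
  also have "\<dots> = (R *\<^sub>v y) \<bullet> z + (1/2) * (P y \<bullet> z)" using dot_Jv_Jv Ry Py z by simp
  also have "\<dots> = y \<bullet> (R *\<^sub>v z)" using Rsym PYz by simp
  finally have l: "om n (AA *\<^sub>v y) z = y \<bullet> (R *\<^sub>v z)" .
  have "AA *\<^sub>v z = Jv n (R *\<^sub>v z)" unfolding AA_mult[OF z] Pz0 using Ry by (intro eq_vecI, auto)
  hence "om n y (AA *\<^sub>v z) = y \<bullet> Jv n (Jv n (R *\<^sub>v z))" unfolding om_def by simp
  also have "\<dots> = - (y \<bullet> (R *\<^sub>v z))" unfolding Jv_Jv[OF Ry(2)]
    by (rule scalar_prod_uminus_right, insert y Ry R, auto)
  finally show ?thesis using l by simp
qed

lemma om_pow: assumes y: "y \<in> carrier_vec (2*n)" and z: "z \<in> carrier_vec (2*n)"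
  shows "(\<And>i. i < j \<Longrightarrow> C *\<^sub>v (AA ^\<^sub>m i *\<^sub>v z) = 0\<^sub>v (2*m)) \<Longrightarrow>
    om n (AA ^\<^sub>m j *\<^sub>v y) z = (-1)^j * om n y (AA ^\<^sub>m j *\<^sub>v z)"
  using y
proof (induction j arbitrary: y)
  case 0
  have "dim_row AA = 2*n" using AA_carrier by auto
  thus ?case using z 0 by simp
next
  case (Suc j y)
  have A: "AA \<in> carrier_mat (2*n) (2*n)" by (rule AA_carrier)
  have Ay: "AA *\<^sub>v y \<in> carrier_vec (2*n)" using A Suc.prems(2) by simp
  have Ajz: "AA ^\<^sub>m j *\<^sub>v z \<in> carrier_vec (2*n)" by (rule pow_vec_carrier[OF A z])
  have "AA ^\<^sub>m Suc j *\<^sub>v y = AA ^\<^sub>m j *\<^sub>v (AA *\<^sub>v y)"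
    using pow_mult_vec_add[OF A Suc.prems(2), of j 1] A Suc.prems(2) by simp
  hence "om n (AA ^\<^sub>m Suc j *\<^sub>v y) z = om n (AA ^\<^sub>m j *\<^sub>v (AA *\<^sub>v y)) z" by simp
  also have "\<dots> = (-1)^j * om n (AA *\<^sub>v y) (AA ^\<^sub>m j *\<^sub>v z)"
    using Suc.IH[OF _ Ay] Suc.prems(1) by simp
  also have "om n (AA *\<^sub>v y) (AA ^\<^sub>m j *\<^sub>v z) = - om n y (AA *\<^sub>v (AA ^\<^sub>m j *\<^sub>v z))"
    by (rule om_AA[OF Suc.prems(2) Ajz Suc.prems(1)], simp)
  also have "AA *\<^sub>v (AA ^\<^sub>m j *\<^sub>v z) = AA ^\<^sub>m Suc j *\<^sub>v z"
    using pow_mult_vec_Suc[OF A z] by simp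
  finally show ?case by simp
qed

end

(* ---- part PM ---- *)
lemma col_unit: fixes M :: "real mat" assumes M: "M \<in> carrier_mat nr nc" and c: "c < nc"
  shows "col M c = M *\<^sub>v unit_vec nc c"
proof -
  have d: "dim_row M = nr" "dim_col M = nc" using M by auto
  show ?thesis by (rule eq_vecI, insert d c, auto)
qed

context qsys begin

lemma ctrl_BB_pow: assumes j: "j < 2*n" and u: "u \<in> carrier_vec (2*m)"
  shows "AA ^\<^sub>m j *\<^sub>v (BB *\<^sub>v u) \<in> controllable_subspace AA BB"
proof -
  have A: "AA \<in> carrier_mat (2*n) (2*n)" by (rule AA_carrier)
  have B: "BB \<in> carrier_mat (2*n) (2*m)" by (rule BB_carrier)
  have Cs: "subsp (2*n) (controllable_subspace AA BB)" by (rule ctrl_subsp[OF A B])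
  have Aj: "AA ^\<^sub>m j \<in> carrier_mat (2*n) (2*n)" using A by simp
  have colc: "col BB i \<in> carrier_vec (2*n)" for i using B unfolding carrier_vec_def by simp
  have "AA ^\<^sub>m j *\<^sub>v (BB *\<^sub>v u) = AA ^\<^sub>m j *\<^sub>v vsum (2*n) (\<lambda>i. u $ i \<cdot>\<^sub>v col BB i) (2*m)"
    unfolding mat_vec_vsum[OF B u] ..
  also have "\<dots> = vsum (2*n) (\<lambda>i. AA ^\<^sub>m j *\<^sub>v (u $ i \<cdot>\<^sub>v col BB i)) (2*m)"
    by (rule vsum_mult[OF Aj], insert colc, auto)
  also have "\<dots> \<in> controllable_subspace AA BB"
  proof (rule vsum_subsp[OF Cs])
    fix i assume i: "i < 2*m"
    have "AA ^\<^sub>m j *\<^sub>v (u $ i \<cdot>\<^sub>v col BB i) = u $ i \<cdot>\<^sub>v (AA ^\<^sub>m j *\<^sub>v col BB i)"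
      by (rule mult_mat_vec[OF Aj colc])
    thus "AA ^\<^sub>m j *\<^sub>v (u $ i \<cdot>\<^sub>v col BB i) \<in> controllable_subspace AA BB"
      using subsp_smult[OF Cs ctrl_col[OF A B j i]] by simp
  qed
  finally show ?thesis .
qed

theorem unobs_omega:
  "unobservable_subspace AA C = {x \<in> carrier_vec (2*n). \<forall>s \<in> controllable_subspace AA BB. om n s x = 0}"
proof -
  have A: "AA \<in> carrier_mat (2*n) (2*n)" by (rule AA_carrier)
  have B: "BB \<in> carrier_mat (2*n) (2*m)" by (rule BB_carrier)
  note char = unobs_char[OF A C]
  show ?thesis
  proof (intro equalityI subsetI CollectI conjI ballI)
    fix x assume x: "x \<in> unobservable_subspace AA C"
    hence xc: "x \<in> carrier_vec (2*n)" and Z: "\<And>j. j < 2*n \<Longrightarrow> C *\<^sub>v (AA ^\<^sub>m j *\<^sub>v x) = 0\<^sub>v (2*m)"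
      using char by auto
    show "x \<in> carrier_vec (2*n)" by (rule xc)
    define W where "W = {s \<in> carrier_vec (2*n). om n s x = 0}"
    have W: "subsp (2*n) W" unfolding subsp_def W_def
      using xc by (auto simp: om_add_left om_smult_left)
    have "controllable_subspace AA BB \<subseteq> W"
    proof (rule ctrl_min[OF A B W])
      fix j c assume j: "j < 2*n" and c: "c < 2*m"
      have ec: "unit_vec (2*m) c \<in> carrier_vec (2*m)" by simp
      have bc: "col BB c \<in> carrier_vec (2*n)" using B unfolding carrier_vec_def by simp
      have Ajx: "AA ^\<^sub>m j *\<^sub>v x \<in> carrier_vec (2*n)" by (rule pow_vec_carrier[OF A xc])
      have "om n (AA ^\<^sub>m j *\<^sub>v col BB c) x = (-1)^j * om n (col BB c) (AA ^\<^sub>m j *\<^sub>v x)"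
        by (rule om_pow[OF bc xc], insert Z j, auto)
      also have "om n (col BB c) (AA ^\<^sub>m j *\<^sub>v x) = 0"
        unfolding col_unit[OF B c] om_BB[OF ec Ajx] Z[OF j] by simp
      finally show "AA ^\<^sub>m j *\<^sub>v col BB c \<in> W" unfolding W_def using pow_vec_carrier[OF A bc] by simp
    qed
    thus "\<And>s. s \<in> controllable_subspace AA BB \<Longrightarrow> om n s x = 0" unfolding W_def by auto
  next
    fix x assume "x \<in> {x \<in> carrier_vec (2*n). \<forall>s \<in> controllable_subspace AA BB. om n s x = 0}"
    hence xc: "x \<in> carrier_vec (2*n)" and H: "\<And>s. s \<in> controllable_subspace AA BB \<Longrightarrow> om n s x = 0"
      by auto
    have "\<forall>j. j < 2*n \<longrightarrow> C *\<^sub>v (AA ^\<^sub>m j *\<^sub>v x) = 0\<^sub>v (2*m)"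
    proof (intro allI)
      fix j show "j < 2*n \<longrightarrow> C *\<^sub>v (AA ^\<^sub>m j *\<^sub>v x) = 0\<^sub>v (2*m)"
      proof (induction j rule: less_induct)
        case (less j)
        show ?case
        proof
          assume j: "j < 2*n"
          have IH: "\<And>i. i < j \<Longrightarrow> C *\<^sub>v (AA ^\<^sub>m i *\<^sub>v x) = 0\<^sub>v (2*m)" using less j by auto
          define w where "w = C *\<^sub>v (AA ^\<^sub>m j *\<^sub>v x)"
          have Ajx: "AA ^\<^sub>m j *\<^sub>v x \<in> carrier_vec (2*n)" by (rule pow_vec_carrier[OF A xc])
          have wc: "w \<in> carrier_vec (2*m)" unfolding w_def using C Ajx by simp
          have key: "Jv m (\<Sigma> *\<^sub>v u) \<bullet> w = 0" if u: "u \<in> carrier_vec (2*m)" for u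
          proof -
            have Bu: "BB *\<^sub>v u \<in> carrier_vec (2*n)" using B u by simp
            have "0 = om n (AA ^\<^sub>m j *\<^sub>v (BB *\<^sub>v u)) x" using H[OF ctrl_BB_pow[OF j u]] by simp
            also have "\<dots> = (-1)^j * om n (BB *\<^sub>v u) (AA ^\<^sub>m j *\<^sub>v x)"
              by (rule om_pow[OF Bu xc IH])
            also have "om n (BB *\<^sub>v u) (AA ^\<^sub>m j *\<^sub>v x) = Jv m (\<Sigma> *\<^sub>v u) \<bullet> w"
              unfolding w_def by (rule om_BB[OF u Ajx])
            finally show ?thesis by simp
          qed
          define u where "u = sharp \<Sigma> *\<^sub>v (- Jv m w)"
          have mwc: "- Jv m w \<in> carrier_vec (2*m)" by simp
          have uc: "u \<in> carrier_vec (2*m)" unfolding u_def using sharp_carrier[OF Sc] by simp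
          have "\<Sigma> *\<^sub>v u = - Jv m w" unfolding u_def by (rule symp_inv(2)[OF Sigma mwc])
          hence "Jv m (\<Sigma> *\<^sub>v u) = w" using Jv_uminus[of "Jv m w" m] Jv_Jv[OF wc] wc by simp
          hence "w \<bullet> w = 0" using key[OF uc] by simp
          thus "C *\<^sub>v (AA ^\<^sub>m j *\<^sub>v x) = 0\<^sub>v (2*m)" using dot_self_zero[OF wc] unfolding w_def by simp
        qed
      qed
    qed
    thus "x \<in> unobservable_subspace AA C" using char xc by auto
  qed
qed

end

(* ---- part PN ---- *)
context
  fixes n :: nat and V :: "real mat"
  assumes Vs: "symplectic n V"
begin

lemma Vc: "V \<in> carrier_mat (2*n) (2*n)" using Vs by (rule symp_carrier)
lemma Wc: "sharp V \<in> carrier_mat (2*n) (2*n)" by (rule sharp_carrier[OF Vc])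

lemma conj_pow: assumes A: "A \<in> carrier_mat (2*n) (2*n)" and x: "x \<in> carrier_vec (2*n)"
  shows "(V * A * sharp V) ^\<^sub>m j *\<^sub>v x = V *\<^sub>v (A ^\<^sub>m j *\<^sub>v (sharp V *\<^sub>v x))"
  using x
proof (induction j arbitrary: x)
  case 0
  have "dim_row (V * A * sharp V) = 2*n" "dim_row A = 2*n" using Vc A by auto
  moreover have "sharp V *\<^sub>v x \<in> carrier_vec (2*n)" using Wc 0 by simp
  ultimately show ?case using symp_inv(2)[OF Vs 0] 0 by simp
next
  case (Suc j x)
  have Ah: "V * A * sharp V \<in> carrier_mat (2*n) (2*n)" using Vc A Wc by auto
  have Wx: "sharp V *\<^sub>v x \<in> carrier_vec (2*n)" using Wc Suc.prems by simp
  have AWx: "A *\<^sub>v (sharp V *\<^sub>v x) \<in> carrier_vec (2*n)" using A Wx by simp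
  have e1: "(V * A * sharp V) *\<^sub>v x = V *\<^sub>v (A *\<^sub>v (sharp V *\<^sub>v x))"
  proof -
    have VA: "V * A \<in> carrier_mat (2*n) (2*n)" using Vc A by simp
    have "(V * A * sharp V) *\<^sub>v x = (V * A) *\<^sub>v (sharp V *\<^sub>v x)" by (rule assoc_mult_mat_vec[OF VA Wc Suc.prems])
    also have "\<dots> = V *\<^sub>v (A *\<^sub>v (sharp V *\<^sub>v x))" by (rule assoc_mult_mat_vec[OF Vc A Wx])
    finally show ?thesis .
  qed
  have "(V * A * sharp V) ^\<^sub>m Suc j *\<^sub>v x = (V * A * sharp V) ^\<^sub>m j *\<^sub>v ((V * A * sharp V) *\<^sub>v x)"
    using pow_mult_vec_add[OF Ah Suc.prems, of j 1] Ah Suc.prems by simp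
  also have "\<dots> = V *\<^sub>v (A ^\<^sub>m j *\<^sub>v (sharp V *\<^sub>v (V *\<^sub>v (A *\<^sub>v (sharp V *\<^sub>v x)))))"
    unfolding e1 by (rule Suc.IH, insert Vc AWx, simp)
  also have "sharp V *\<^sub>v (V *\<^sub>v (A *\<^sub>v (sharp V *\<^sub>v x))) = A *\<^sub>v (sharp V *\<^sub>v x)"
    by (rule symp_inv(1)[OF Vs AWx])
  also have "A ^\<^sub>m j *\<^sub>v (A *\<^sub>v (sharp V *\<^sub>v x)) = A ^\<^sub>m Suc j *\<^sub>v (sharp V *\<^sub>v x)"
    using pow_mult_vec_add[OF A Wx, of j 1] A by simp
  finally show ?case .
qed

lemma ctrl_transport: assumes A: "A \<in> carrier_mat (2*n) (2*n)" and B: "B \<in> carrier_mat (2*n) p"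
  shows "controllable_subspace (V * A * sharp V) (V * B) = (\<lambda>x. V *\<^sub>v x) ` controllable_subspace A B"
proof -
  let ?Ah = "V * A * sharp V" and ?Bh = "V * B"
  have Ah: "?Ah \<in> carrier_mat (2*n) (2*n)" using Vc A Wc by auto
  have Bh: "?Bh \<in> carrier_mat (2*n) p" using Vc B by auto
  have S: "subsp (2*n) (controllable_subspace A B)" by (rule ctrl_subsp[OF A B])
  have Sh: "subsp (2*n) (controllable_subspace ?Ah ?Bh)" by (rule ctrl_subsp[OF Ah Bh])
  have gen: "?Ah ^\<^sub>m j *\<^sub>v col ?Bh c = V *\<^sub>v (A ^\<^sub>m j *\<^sub>v col B c)" if c: "c < p" for j c
  proof -
    have bc: "col B c \<in> carrier_vec (2*n)" using B c by simp
    have "col ?Bh c = V *\<^sub>v col B c" by (rule col_mult2[OF Vc B c])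
    hence "?Ah ^\<^sub>m j *\<^sub>v col ?Bh c = V *\<^sub>v (A ^\<^sub>m j *\<^sub>v (sharp V *\<^sub>v (V *\<^sub>v col B c)))"
      using conj_pow[OF A, of "V *\<^sub>v col B c" j] Vc bc by simp
    thus ?thesis using symp_inv(1)[OF Vs bc] by simp
  qed
  show ?thesis
  proof
    show "controllable_subspace ?Ah ?Bh \<subseteq> (\<lambda>x. V *\<^sub>v x) ` controllable_subspace A B"
    proof (rule ctrl_min[OF Ah Bh image_subsp[OF Vc S]])
      fix j c assume j: "j < 2*n" and c: "c < p"
      show "?Ah ^\<^sub>m j *\<^sub>v col ?Bh c \<in> (\<lambda>x. V *\<^sub>v x) ` controllable_subspace A B"
        unfolding gen[OF c] using ctrl_col[OF A B j c] by blast
    qed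
  next
    define P where "P = {y \<in> carrier_vec (2*n). V *\<^sub>v y \<in> controllable_subspace ?Ah ?Bh}"
    have Ps: "subsp (2*n) P" unfolding subsp_def
    proof (intro conjI ballI allI)
      show "P \<subseteq> carrier_vec (2*n)" unfolding P_def by auto
      have "V *\<^sub>v 0\<^sub>v (2*n) = 0\<^sub>v (2*n)" using Vc by auto
      thus "0\<^sub>v (2*n) \<in> P" unfolding P_def using subsp_zero[OF Sh] by auto
      fix y z assume "y \<in> P" "z \<in> P"
      thus "y + z \<in> P" unfolding P_def using subsp_add[OF Sh]
        by (auto simp: mult_add_distrib_mat_vec[OF Vc])
    next
      fix c y assume "y \<in> P"
      thus "c \<cdot>\<^sub>v y \<in> P" unfolding P_def using subsp_smult[OF Sh]
        by (auto simp: mult_mat_vec[OF Vc])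
    qed
    have "controllable_subspace A B \<subseteq> P"
    proof (rule ctrl_min[OF A B Ps])
      fix j c assume j: "j < 2*n" and c: "c < p"
      have bc: "col B c \<in> carrier_vec (2*n)" using B c by simp
      show "A ^\<^sub>m j *\<^sub>v col B c \<in> P" unfolding P_def
        using ctrl_col[OF Ah Bh j c] gen[OF c] pow_vec_carrier[OF A bc] by simp
    qed
    thus "(\<lambda>x. V *\<^sub>v x) ` controllable_subspace A B \<subseteq> controllable_subspace ?Ah ?Bh"
      unfolding P_def by auto
  qed
qed

lemma unobs_transport: assumes A: "A \<in> carrier_mat (2*n) (2*n)" and C: "C \<in> carrier_mat q (2*n)"
  shows "unobservable_subspace (V * A * sharp V) (C * sharp V) = (\<lambda>x. V *\<^sub>v x) ` unobservable_subspace A C"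
proof -
  let ?Ah = "V * A * sharp V" and ?Ch = "C * sharp V"
  have Ah: "?Ah \<in> carrier_mat (2*n) (2*n)" using Vc A Wc by auto
  have Ch: "?Ch \<in> carrier_mat q (2*n)" using C Wc by auto
  have key: "x \<in> unobservable_subspace ?Ah ?Ch \<longleftrightarrow> x \<in> carrier_vec (2*n) \<and> sharp V *\<^sub>v x \<in> unobservable_subspace A C" for x
  proof -
    have "?Ch *\<^sub>v (?Ah ^\<^sub>m j *\<^sub>v x) = C *\<^sub>v (A ^\<^sub>m j *\<^sub>v (sharp V *\<^sub>v x))" if x: "x \<in> carrier_vec (2*n)" for j
    proof -
      have Wx: "sharp V *\<^sub>v x \<in> carrier_vec (2*n)" using Wc x by simp
      have v: "A ^\<^sub>m j *\<^sub>v (sharp V *\<^sub>v x) \<in> carrier_vec (2*n)" by (rule pow_vec_carrier[OF A Wx])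
      have "?Ch *\<^sub>v (?Ah ^\<^sub>m j *\<^sub>v x) = ?Ch *\<^sub>v (V *\<^sub>v (A ^\<^sub>m j *\<^sub>v (sharp V *\<^sub>v x)))"
        using conj_pow[OF A x] by simp
      also have "\<dots> = C *\<^sub>v (sharp V *\<^sub>v (V *\<^sub>v (A ^\<^sub>m j *\<^sub>v (sharp V *\<^sub>v x))))"
        using C Wc Vc v by simp
      also have "sharp V *\<^sub>v (V *\<^sub>v (A ^\<^sub>m j *\<^sub>v (sharp V *\<^sub>v x))) = A ^\<^sub>m j *\<^sub>v (sharp V *\<^sub>v x)"
        by (rule symp_inv(1)[OF Vs v])
      finally show ?thesis .
    qed
    thus ?thesis unfolding unobs_char[OF Ah Ch] unobs_char[OF A C] using Wc by auto
  qed
  show ?thesis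
  proof (intro equalityI subsetI)
    fix x assume "x \<in> unobservable_subspace ?Ah ?Ch"
    hence x: "x \<in> carrier_vec (2*n)" "sharp V *\<^sub>v x \<in> unobservable_subspace A C" using key by auto
    have "x = V *\<^sub>v (sharp V *\<^sub>v x)" using symp_inv(2)[OF Vs x(1)] by simp
    thus "x \<in> (\<lambda>x. V *\<^sub>v x) ` unobservable_subspace A C" using x(2) by blast
  next
    fix x assume "x \<in> (\<lambda>x. V *\<^sub>v x) ` unobservable_subspace A C"
    then obtain y where y: "y \<in> unobservable_subspace A C" "x = V *\<^sub>v y" by blast
    have yc: "y \<in> carrier_vec (2*n)" using y(1) unobs_char[OF A C] by auto
    show "x \<in> unobservable_subspace ?Ah ?Ch" unfolding key y(2)
      using symp_inv(1)[OF Vs yc] y(1) Vc yc by simp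
  qed
qed

lemma omega_transport: assumes S: "S \<subseteq> carrier_vec (2*n)"
  shows "(\<lambda>x. V *\<^sub>v x) ` {x \<in> carrier_vec (2*n). \<forall>s\<in>S. om n s x = 0}
     = {x \<in> carrier_vec (2*n). \<forall>s\<in>(\<lambda>x. V *\<^sub>v x) ` S. om n s x = 0}"
proof (intro equalityI subsetI)
  fix x assume "x \<in> (\<lambda>x. V *\<^sub>v x) ` {x \<in> carrier_vec (2*n). \<forall>s\<in>S. om n s x = 0}"
  then obtain y where y: "y \<in> carrier_vec (2*n)" "\<forall>s\<in>S. om n s y = 0" "x = V *\<^sub>v y" by blast
  have "om n s' x = 0" if s': "s' \<in> (\<lambda>x. V *\<^sub>v x) ` S" for s'
  proof -
    obtain s where s: "s \<in> S" "s' = V *\<^sub>v s" using s' by blast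
    have "om n s' x = om n s y" unfolding s(2) y(3) by (rule symp_om[OF Vs], insert s S y, auto)
    thus ?thesis using y s by simp
  qed
  thus "x \<in> {x \<in> carrier_vec (2*n). \<forall>s\<in>(\<lambda>x. V *\<^sub>v x) ` S. om n s x = 0}" using y Vc by auto
next
  fix x assume "x \<in> {x \<in> carrier_vec (2*n). \<forall>s\<in>(\<lambda>x. V *\<^sub>v x) ` S. om n s x = 0}"
  hence x: "x \<in> carrier_vec (2*n)" and H: "\<And>s. s \<in> S \<Longrightarrow> om n (V *\<^sub>v s) x = 0" by auto
  define y where "y = sharp V *\<^sub>v x"
  have yc: "y \<in> carrier_vec (2*n)" unfolding y_def using Wc x by simp
  have xy: "x = V *\<^sub>v y" unfolding y_def using symp_inv(2)[OF Vs x] by simp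
  have "om n s y = 0" if s: "s \<in> S" for s
  proof -
    have "om n s y = om n (V *\<^sub>v s) (V *\<^sub>v y)" by (rule symp_om[OF Vs, symmetric], insert s S yc, auto)
    thus ?thesis using H[OF s] xy by simp
  qed
  thus "x \<in> (\<lambda>x. V *\<^sub>v x) ` {x \<in> carrier_vec (2*n). \<forall>s\<in>S. om n s x = 0}" using xy yc by blast
qed

end

(* ---- part PO ---- *)
lemma cs_unit: "j < N \<Longrightarrow> j \<in> I \<Longrightarrow> unit_vec N j \<in> coord_span N I"
  unfolding coord_span_def by auto

lemma cs_zero: "x \<in> coord_span N I \<Longrightarrow> i < N \<Longrightarrow> i \<notin> I \<Longrightarrow> x $ i = 0"
  unfolding coord_span_def by auto

lemma cs_inter: "coord_span N I \<inter> coord_span N J = coord_span N (I \<inter> J)"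
  unfolding coord_span_def by auto

lemma cs_orth: "orth_compl N (coord_span N I) = coord_span N ({..<N} - I)"
proof (intro equalityI subsetI)
  fix y assume "y \<in> orth_compl N (coord_span N I)"
  hence y: "y \<in> carrier_vec N" and H: "\<And>x. x \<in> coord_span N I \<Longrightarrow> y \<bullet> x = 0"
    unfolding orth_compl_def by auto
  have "y $ i = 0" if "i < N" "i \<in> I" for i
    using H[OF cs_unit[OF that]] that by simp
  thus "y \<in> coord_span N ({..<N} - I)" using y unfolding coord_span_def by auto
next
  fix y assume "y \<in> coord_span N ({..<N} - I)"
  hence y: "y \<in> carrier_vec N" and yz: "\<And>i. i < N \<Longrightarrow> i \<in> I \<Longrightarrow> y $ i = 0"
    unfolding coord_span_def by auto
  have "y \<bullet> x = 0" if x: "x \<in> coord_span N I" for x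
  proof -
    have xc: "x \<in> carrier_vec N" using x unfolding coord_span_def by auto
    have "y \<bullet> x = (\<Sum>i\<in>{0..<N}. y $ i * x $ i)" using xc unfolding scalar_prod_def by simp
    also have "\<dots> = (\<Sum>i\<in>{0..<N}. 0)"
      by (rule sum.cong, insert yz cs_zero[OF x], auto)
    finally show ?thesis by simp
  qed
  thus "y \<in> orth_compl N (coord_span N I)" using y unfolding orth_compl_def by auto
qed

lemma blk_le: "blk n k l i \<le> 5" unfolding blk_def by auto

lemma idx_inter: "idx_of n k l X \<inter> idx_of n k l Y = idx_of n k l (X \<inter> Y)"
  unfolding idx_of_def by auto

lemma idx_compl: assumes "X \<union> Y = {0,1,2,3,4,5}" "X \<inter> Y = {}"
  shows "{..<2*n} - idx_of n k l X = idx_of n k l Y"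
proof -
  have "blk n k l i \<in> {0,1,2,3,4,5}" for i using blk_le[of n k l i] by auto
  thus ?thesis using assms unfolding idx_of_def by blast
qed

lemma Iset_idx: assumes "k + l \<le> n" shows "Iset n 0 k l = idx_of n k l {0,3,4}"
  using assms unfolding Iset_def idx_of_def blk_def by auto

lemma omega_Z: assumes kl: "k + l \<le> n"
  shows "{x \<in> carrier_vec (2*n). \<forall>s\<in>coord_span (2*n) (Iset n 0 k l). om n s x = 0}
    = coord_span (2*n) (idx_of n k l {2,4,5})"
proof (intro equalityI subsetI)
  fix x assume "x \<in> {x \<in> carrier_vec (2*n). \<forall>s\<in>coord_span (2*n) (Iset n 0 k l). om n s x = 0}"
  hence x: "x \<in> carrier_vec (2*n)" and H: "\<And>s. s \<in> coord_span (2*n) (Iset n 0 k l) \<Longrightarrow> om n s x = 0" by auto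
  have "x $ i = 0" if i: "i < 2*n" "i \<notin> idx_of n k l {2,4,5}" for i
  proof (cases "i < n")
    case True
    hence "i < k + l" using i unfolding idx_of_def blk_def by (auto split: if_splits)
    hence "i + n \<in> Iset n 0 k l" "i + n < 2*n" using True unfolding Iset_def by auto
    from H[OF cs_unit[OF this(2,1)]] show ?thesis using om_unit(2)[OF True x] by simp
  next
    case False
    define i' where "i' = i - n"
    have i': "i' < n" "i = i' + n" using False i unfolding i'_def by auto
    hence "i' < k" using i unfolding idx_of_def blk_def by (auto split: if_splits)
    hence "i' \<in> Iset n 0 k l" "i' < 2*n" using i' unfolding Iset_def by auto
    from H[OF cs_unit[OF this(2,1)]] show ?thesis using om_unit(1)[OF i'(1) x] i'(2) by simp
  qed
  thus "x \<in> coord_span (2*n) (idx_of n k l {2,4,5})" using x unfolding coord_span_def by auto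
next
  fix x assume xx: "x \<in> coord_span (2*n) (idx_of n k l {2,4,5})"
  hence x: "x \<in> carrier_vec (2*n)" unfolding coord_span_def by auto
  have z1: "x $ i = 0" if "i < k + l" for i
    by (rule cs_zero[OF xx], insert that kl, auto simp: idx_of_def blk_def)
  have z2: "x $ (i + n) = 0" if "i < k" for i
    by (rule cs_zero[OF xx], insert that kl, auto simp: idx_of_def blk_def)
  have "om n s x = 0" if s: "s \<in> coord_span (2*n) (Iset n 0 k l)" for s
  proof -
    have sc: "s \<in> carrier_vec (2*n)" using s unfolding coord_span_def by auto
    have s1: "s $ i = 0" if "i < n" "\<not> i < k" for i
      by (rule cs_zero[OF s], insert that, auto simp: Iset_def)
    have s2: "s $ (i + n) = 0" if "i < n" "\<not> i < k + l" for i
      by (rule cs_zero[OF s], insert that, auto simp: Iset_def)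
    have "om n s x = (\<Sum>i\<in>{0..<n}. s$i * x$(i+n) - s$(i+n) * x$i)" by (rule om_sum[OF sc x])
    also have "\<dots> = (\<Sum>i\<in>{0..<n}. 0)"
    proof (rule sum.cong[OF refl])
      fix i assume "i \<in> {0..<n}"
      hence i: "i < n" by simp
      show "s$i * x$(i+n) - s$(i+n) * x$i = 0"
      proof (cases "i < k")
        case True thus ?thesis using z1 z2 by simp
      next
        case False
        hence "s $ i = 0" using s1 i by simp
        moreover have "s $ (i+n) * x $ i = 0" using z1 s2 i by (cases "i < k + l", auto)
        ultimately show ?thesis by simp
      qed
    qed
    finally show ?thesis by simp
  qed
  thus "x \<in> {x \<in> carrier_vec (2*n). \<forall>s\<in>coord_span (2*n) (Iset n 0 k l). om n s x = 0}" using x by auto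
qed

lemma A_allowed_cases: assumes "r \<le> 5" "c \<le> 5" "\<not> A_allowed r c"
  shows "(c \<in> {0,3,4} \<and> r \<notin> {0,3,4}) \<or> (c \<in> {2,4,5} \<and> r \<notin> {2,4,5})"
proof -
  have "r \<in> {0,1,2,3,4,5}" "c \<in> {0,1,2,3,4,5}" using assms by auto
  thus ?thesis using assms(3) unfolding A_allowed_def by auto
qed

lemma mat_unit_index: fixes M :: "real mat"
  assumes M: "M \<in> carrier_mat nr nc" and i: "i < nr" and j: "j < nc"
  shows "M $$ (i,j) = (M *\<^sub>v unit_vec nc j) $ i"
  using M i j by (simp add: scalar_prod_right_unit)

(* ---- part PP ---- *)
context qsys begin

lemma main1: "\<exists>V k l. symplectic n V \<and> k + l \<le> n \<and>
    (let A = AA;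
         B = BB;
         Ah = V * A * sharp V;
         Bh = V * B;
         Ch = C * sharp V
     in controllable_subspace Ah Bh \<inter> observable_subspace Ah Ch
          = coord_span (2*n) (idx_of n k l {0,3})
      \<and> controllable_subspace Ah Bh \<inter> unobservable_subspace Ah Ch
          = coord_span (2*n) (idx_of n k l {4})
      \<and> uncontrollable_subspace Ah Bh \<inter> observable_subspace Ah Ch
          = coord_span (2*n) (idx_of n k l {1})
      \<and> uncontrollable_subspace Ah Bh \<inter> unobservable_subspace Ah Ch
          = coord_span (2*n) (idx_of n k l {2,5})
      \<and> controllable_subspace Ah Bh = coord_span (2*n) (idx_of n k l {0,3,4})
      \<and> unobservable_subspace Ah Ch = coord_span (2*n) (idx_of n k l {2,4,5})
      \<and> (\<forall>i<2*n. \<forall>j<2*n. \<not> A_allowed (blk n k l i) (blk n k l j) \<longrightarrow> Ah $$ (i,j) = 0)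
      \<and> (\<forall>i<2*n. \<forall>j<2*m. blk n k l i \<in> {1,2,5} \<longrightarrow> Bh $$ (i,j) = 0)
      \<and> (\<forall>i<2*m. \<forall>j<2*n. blk n k l j \<in> {2,4,5} \<longrightarrow> Ch $$ (i,j) = 0))"
proof -
  have A: "AA \<in> carrier_mat (2*n) (2*n)" by (rule AA_carrier)
  have B: "BB \<in> carrier_mat (2*n) (2*m)" by (rule BB_carrier)
  define S where "S = controllable_subspace AA BB"
  have Ssub: "subsp (2*n) S" unfolding S_def by (rule ctrl_subsp[OF A B])
  have Sc: "S \<subseteq> carrier_vec (2*n)" by (rule subsp_carrier[OF Ssub])
  have SV: "S \<subseteq> Vge n 0" using Sc unfolding Vge_def by auto
  obtain V k l where V: "good n 0 V" "0 + k + l \<le> n" "(\<lambda>x. V *\<^sub>v x) ` S = coord_span (2*n) (Iset n 0 k l)"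
    using gen_nf[OF _ Ssub SV] by blast
  have Vs: "symplectic n V" using V(1) unfolding good_def by auto
  have kl: "k + l \<le> n" using V(2) by simp
  have Vc: "V \<in> carrier_mat (2*n) (2*n)" by (rule symp_carrier[OF Vs])
  have Wc: "sharp V \<in> carrier_mat (2*n) (2*n)" by (rule sharp_carrier[OF Vc])
  define Ah where "Ah = V * AA * sharp V"
  define Bh where "Bh = V * BB"
  define Ch where "Ch = C * sharp V"
  have Ahc: "Ah \<in> carrier_mat (2*n) (2*n)" unfolding Ah_def using Vc A Wc by auto
  have Bhc: "Bh \<in> carrier_mat (2*n) (2*m)" unfolding Bh_def using Vc B by auto
  have Chc: "Ch \<in> carrier_mat (2*m) (2*n)" unfolding Ch_def using C Wc by auto
  have ctrl: "controllable_subspace Ah Bh = coord_span (2*n) (idx_of n k l {0,3,4})"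
    unfolding Ah_def Bh_def ctrl_transport[OF Vs A B] S_def[symmetric] V(3) Iset_idx[OF kl] ..
  have unobs: "unobservable_subspace Ah Ch = coord_span (2*n) (idx_of n k l {2,4,5})"
    unfolding Ah_def Ch_def unobs_transport[OF Vs A C] unobs_omega S_def[symmetric]
      omega_transport[OF Vs Sc] V(3) omega_Z[OF kl] ..
  have dr: "dim_row Ah = 2*n" using Ahc by auto
  have unctrl: "uncontrollable_subspace Ah Bh = coord_span (2*n) (idx_of n k l {1,2,5})"
    unfolding uncontrollable_subspace_def dr ctrl cs_orth by (subst idx_compl, auto)
  have obs: "observable_subspace Ah Ch = coord_span (2*n) (idx_of n k l {0,1,3})"
    unfolding observable_subspace_def dr unobs cs_orth by (subst idx_compl, auto)
  have e1: "{0,3,4} \<inter> {0,1,3} = {0,3::nat}" by auto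
  have e2: "{0,3,4} \<inter> {2,4,5} = {4::nat}" by auto
  have e3: "{1,2,5} \<inter> {0,1,3} = {1::nat}" by auto
  have e4: "{1,2,5} \<inter> {2,4,5} = {2,5::nat}" by auto
  have Apat: "\<forall>i<2*n. \<forall>j<2*n. \<not> A_allowed (blk n k l i) (blk n k l j) \<longrightarrow> Ah $$ (i,j) = 0"
  proof (intro allI impI)
    fix i j assume i: "i < 2*n" and j: "j < 2*n" and na: "\<not> A_allowed (blk n k l i) (blk n k l j)"
    have ij: "Ah $$ (i,j) = (Ah *\<^sub>v unit_vec (2*n) j) $ i" by (rule mat_unit_index[OF Ahc i j])
    from A_allowed_cases[OF blk_le blk_le na]
    show "Ah $$ (i,j) = 0"
    proof
      assume c: "blk n k l j \<in> {0,3,4} \<and> blk n k l i \<notin> {0,3,4}"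
      have "unit_vec (2*n) j \<in> controllable_subspace Ah Bh" unfolding ctrl
        by (rule cs_unit[OF j], insert j c, auto simp: idx_of_def)
      hence "Ah *\<^sub>v unit_vec (2*n) j \<in> coord_span (2*n) (idx_of n k l {0,3,4})"
        using ctrl_inv[OF Ahc Bhc] unfolding ctrl by blast
      from cs_zero[OF this i] c show ?thesis unfolding ij by (auto simp: idx_of_def)
    next
      assume c: "blk n k l j \<in> {2,4,5} \<and> blk n k l i \<notin> {2,4,5}"
      have "unit_vec (2*n) j \<in> unobservable_subspace Ah Ch" unfolding unobs
        by (rule cs_unit[OF j], insert j c, auto simp: idx_of_def)
      hence "Ah *\<^sub>v unit_vec (2*n) j \<in> coord_span (2*n) (idx_of n k l {2,4,5})"
        using unobs_inv[OF Ahc Chc] unfolding unobs by blast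
      from cs_zero[OF this i] c show ?thesis unfolding ij by (auto simp: idx_of_def)
    qed
  qed
  have Bpat: "\<forall>i<2*n. \<forall>j<2*m. blk n k l i \<in> {1,2,5} \<longrightarrow> Bh $$ (i,j) = 0"
  proof (intro allI impI)
    fix i j assume i: "i < 2*n" and j: "j < 2*m" and b: "blk n k l i \<in> {1,2,5}"
    have n0: "0 < 2*n" using i by simp
    have "Ah ^\<^sub>m 0 *\<^sub>v col Bh j \<in> controllable_subspace Ah Bh" by (rule ctrl_col[OF Ahc Bhc n0 j])
    moreover have "Ah ^\<^sub>m 0 *\<^sub>v col Bh j = col Bh j"
    proof -
      have "col Bh j \<in> carrier_vec (2*n)" using Bhc unfolding carrier_vec_def by simp
      thus ?thesis using dr by simp
    qed
    ultimately have "col Bh j \<in> coord_span (2*n) (idx_of n k l {0,3,4})" unfolding ctrl by simp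
    from cs_zero[OF this i] b have "col Bh j $ i = 0" by (auto simp: idx_of_def)
    thus "Bh $$ (i,j) = 0" using Bhc i j by simp
  qed
  have Cpat: "\<forall>i<2*m. \<forall>j<2*n. blk n k l j \<in> {2,4,5} \<longrightarrow> Ch $$ (i,j) = 0"
  proof (intro allI impI)
    fix i j assume i: "i < 2*m" and j: "j < 2*n" and b: "blk n k l j \<in> {2,4,5}"
    have n0: "0 < 2*n" using j by simp
    have "unit_vec (2*n) j \<in> unobservable_subspace Ah Ch" unfolding unobs
      by (rule cs_unit[OF j], insert j b, auto simp: idx_of_def)
    hence "Ch *\<^sub>v (Ah ^\<^sub>m 0 *\<^sub>v unit_vec (2*n) j) = 0\<^sub>v (2*m)"
      using unobs_char[OF Ahc Chc] n0 by blast
    moreover have "Ah ^\<^sub>m 0 *\<^sub>v unit_vec (2*n) j = unit_vec (2*n) j" using dr by simp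
    ultimately have "Ch *\<^sub>v unit_vec (2*n) j = 0\<^sub>v (2*m)" by simp
    thus "Ch $$ (i,j) = 0" using mat_unit_index[OF Chc i j] i by simp
  qed
  have "controllable_subspace Ah Bh \<inter> observable_subspace Ah Ch = coord_span (2*n) (idx_of n k l {0,3})"
    unfolding ctrl obs cs_inter idx_inter e1 ..
  moreover have "controllable_subspace Ah Bh \<inter> unobservable_subspace Ah Ch = coord_span (2*n) (idx_of n k l {4})"
    unfolding ctrl unobs cs_inter idx_inter e2 ..
  moreover have "uncontrollable_subspace Ah Bh \<inter> observable_subspace Ah Ch = coord_span (2*n) (idx_of n k l {1})"
    unfolding unctrl obs cs_inter idx_inter e3 ..
  moreover have "uncontrollable_subspace Ah Bh \<inter> unobservable_subspace Ah Ch = coord_span (2*n) (idx_of n k l {2,5})"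
    unfolding unctrl unobs cs_inter idx_inter e4 ..
  ultimately have all: "controllable_subspace Ah Bh \<inter> observable_subspace Ah Ch
          = coord_span (2*n) (idx_of n k l {0,3})
      \<and> controllable_subspace Ah Bh \<inter> unobservable_subspace Ah Ch
          = coord_span (2*n) (idx_of n k l {4})
      \<and> uncontrollable_subspace Ah Bh \<inter> observable_subspace Ah Ch
          = coord_span (2*n) (idx_of n k l {1})
      \<and> uncontrollable_subspace Ah Bh \<inter> unobservable_subspace Ah Ch
          = coord_span (2*n) (idx_of n k l {2,5})
      \<and> controllable_subspace Ah Bh = coord_span (2*n) (idx_of n k l {0,3,4})
      \<and> unobservable_subspace Ah Ch = coord_span (2*n) (idx_of n k l {2,4,5})
      \<and> (\<forall>i<2*n. \<forall>j<2*n. \<not> A_allowed (blk n k l i) (blk n k l j) \<longrightarrow> Ah $$ (i,j) = 0)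
      \<and> (\<forall>i<2*n. \<forall>j<2*m. blk n k l i \<in> {1,2,5} \<longrightarrow> Bh $$ (i,j) = 0)
      \<and> (\<forall>i<2*m. \<forall>j<2*n. blk n k l j \<in> {2,4,5} \<longrightarrow> Ch $$ (i,j) = 0)"
    using ctrl unobs Apat Bpat Cpat by blast
  show ?thesis
    by (rule exI[of _ V], rule exI[of _ k], rule exI[of _ l], unfold Let_def,
        fold Ah_def Bh_def Ch_def, intro conjI Vs kl all)
qed

end

theorem theorem1:
  fixes n m :: nat and R C \<Sigma> :: "real mat"
  assumes R: "R \<in> carrier_mat (2*n) (2*n)" "transpose_mat R = R"
    and C: "C \<in> carrier_mat (2*m) (2*n)"
    and Sigma: "symplectic m \<Sigma>"
  shows "\<exists>V k l. symplectic n V \<and> k + l \<le> n \<and>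
    (let A = JJ n * R - (1/2) \<cdot>\<^sub>m (sharp C * C);
         B = - (sharp C * \<Sigma>);
         Ah = V * A * sharp V;
         Bh = V * B;
         Ch = C * sharp V
     in controllable_subspace Ah Bh \<inter> observable_subspace Ah Ch
          = coord_span (2*n) (idx_of n k l {0,3})
      \<and> controllable_subspace Ah Bh \<inter> unobservable_subspace Ah Ch
          = coord_span (2*n) (idx_of n k l {4})
      \<and> uncontrollable_subspace Ah Bh \<inter> observable_subspace Ah Ch
          = coord_span (2*n) (idx_of n k l {1})
      \<and> uncontrollable_subspace Ah Bh \<inter> unobservable_subspace Ah Ch
          = coord_span (2*n) (idx_of n k l {2,5})
      \<and> controllable_subspace Ah Bh = coord_span (2*n) (idx_of n k l {0,3,4})
      \<and> unobservable_subspace Ah Ch = coord_span (2*n) (idx_of n k l {2,4,5})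
      \<and> (\<forall>i<2*n. \<forall>j<2*n. \<not> A_allowed (blk n k l i) (blk n k l j) \<longrightarrow> Ah $$ (i,j) = 0)
      \<and> (\<forall>i<2*n. \<forall>j<2*m. blk n k l i \<in> {1,2,5} \<longrightarrow> Bh $$ (i,j) = 0)
      \<and> (\<forall>i<2*m. \<forall>j<2*n. blk n k l j \<in> {2,4,5} \<longrightarrow> Ch $$ (i,j) = 0))"
proof -
  interpret qsys n m R C \<Sigma> by (unfold_locales, fact R(1), fact R(2), fact C, fact Sigma)
  show ?thesis using main1 unfolding AA_def BB_def .
qed

end
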